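(* Let $\mathcal M=\{A,B,C,D\}$ be a minimal realization of a discrete-time passive system and let $X\in\mathbb X^{>}(\mathcal M)$. Then there is a unique maximal real number $\xi^*(X)$ such that the matrix inequality $$\widetilde W(X,\mathcal M)\ \ge\ \xi\,\operatorname{diag}(X,X,2I_m)$$ holds for $\xi=\xi^*(X)$, and $\xi^*(X)<1$. Moreover, writing $X=T^{\mathsf H}T$ with $T$ nonsingular, $\xi^*(X)=\lambda_{\min}\big(D_s\widetilde W(I_n,\mathcal M_T)D_s\big)$.
   Context: A discrete-time model is $\mathcal M=\{A,B,C,D\}$ with $A\in\mathbb C^{n\times n}$, $B\in\mathbb C^{n\times m}$, $C\in\mathbb C^{m\times n}$, $D\in\mathbb C^{m\times m}$ (system $x_{k+1}=Ax_k+Bu_k$, $y_k=Cx_k+Du_k$), with transfer function $\mathcal T(z)=C(zI_n-A)^{-1}B+D$. It is minimal if $\operatorname{rank}[zI_n-A\ \ B]=n$ and $\operatorname{rank}[zI_n-A^{\mathsf H}\ \ C^{\mathsf H}]=n$ for all $z\in\mathbb C$. The system is passive if $\mathcal T(e^{\imath\omega})^{\mathsf H}+\mathcal T(e^{\imath\omega})\ge0$ for all $\omega\in[-\pi,\pi]$ and all eigenvalues of $A$ lie in the closed unit disc with those on the unit circle semisimple. $\mathbb H_n$ is the set of $n\times n$ Hermitian matrices. For $X\in\mathbb H_n$, $$W(X,\mathcal M)=\begin{bmatrix} X-A^{\mathsf H}XA & C^{\mathsf H}-A^{\mathsf H}XB\\ C-B^{\mathsf H}XA & D^{\mathsf H}+D-B^{\mathsf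 H}XB\end{bmatrix},\qquad \widetilde W(X,\mathcal M)=\begin{bmatrix} X & XA & XB\\ A^{\mathsf H}X & X & C^{\mathsf H}\\ B^{\mathsf H}X & C & D^{\mathsf H}+D\end{bmatrix},$$ and $\mathbb X^{>}(\mathcal M)=\{X\in\mathbb H_n: W(X,\mathcal M)\ge0,\ X>0\}$. $D_s=\operatorname{diag}(I_n,I_n,I_m/\sqrt2)$; for nonsingular $T$, $\mathcal M_T=\{TAT^{-1},TB,CT^{-1},D\}$. *)

theory Defs
  imports Complex_Main "Jordan_Normal_Form.Jordan_Normal_Form" "Jordan_Normal_Form.DL_Rank" "Jordan_Normal_Form.Matrix_Kernel"
    "Jordan_Normal_Form.Gauss_Jordan_Elimination"
begin

definition adj :: "complex mat \<Rightarrow> complex mat" where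
  "adj M = mat (dim_col M) (dim_row M) (\<lambda>(i,j). cnj (M $$ (j,i)))"

definition hcat :: "complex mat \<Rightarrow> complex mat \<Rightarrow> complex mat" where
  "hcat P Q = mat (dim_row P) (dim_col P + dim_col Q)
     (\<lambda>(i,j). if j < dim_col P then P $$ (i,j) else Q $$ (i, j - dim_col P))"

definition blk3 :: "complex mat \<Rightarrow> complex mat \<Rightarrow> complex mat \<Rightarrow> complex mat \<Rightarrow> complex mat
   \<Rightarrow> complex mat \<Rightarrow> complex mat \<Rightarrow> complex mat \<Rightarrow> complex mat \<Rightarrow> complex mat" where
  "blk3 M11 M12 M13 M21 M22 M23 M31 M32 M33 =
     four_block_mat (four_block_mat M11 M12 M21 M22) (M13 @\<^sub>r M23) (hcat M31 M32) M33"

definition hermitian :: "complex mat \<Rightarrow> bool" where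
  "hermitian M \<longleftrightarrow> M \<in> carrier_mat (dim_row M) (dim_row M) \<and> adj M = M"

definition psd :: "complex mat \<Rightarrow> bool" where
  "psd M \<longleftrightarrow> hermitian M \<and>
     (\<forall>v \<in> carrier_vec (dim_row M). Re (conjugate v \<bullet> (M *\<^sub>v v)) \<ge> 0)"

definition pd :: "complex mat \<Rightarrow> bool" where
  "pd M \<longleftrightarrow> hermitian M \<and>
     (\<forall>v \<in> carrier_vec (dim_row M). v \<noteq> 0\<^sub>v (dim_row M) \<longrightarrow> Re (conjugate v \<bullet> (M *\<^sub>v v)) > 0)"

definition loewner_ge :: "complex mat \<Rightarrow> complex mat \<Rightarrow> bool" where
  "loewner_ge M N \<longleftrightarrow> psd (M - N)"

(* smallest eigenvalue of a Hermitian matrix (its eigenvalues are real) *)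
definition lambda_min :: "complex mat \<Rightarrow> real" where
  "lambda_min M = Min {x::real. eigenvalue M (complex_of_real x)}"

definition minv :: "complex mat \<Rightarrow> complex mat" where
  "minv M = the (mat_inverse M)"

definition transfer :: "complex mat \<Rightarrow> complex mat \<Rightarrow> complex mat \<Rightarrow> complex mat \<Rightarrow> complex \<Rightarrow> complex mat" where
  "transfer A B C D z = C * minv (z \<cdot>\<^sub>m 1\<^sub>m (dim_row A) - A) * B + D"

definition semisimple_eig :: "complex mat \<Rightarrow> complex \<Rightarrow> bool" where
  "semisimple_eig A ev \<longleftrightarrow> Polynomial.order ev (char_poly A) = kernel_dim (char_matrix A ev)"

definition minimal_sys :: "complex mat \<Rightarrow> complex mat \<Rightarrow> complex mat \<Rightarrow> complex mat \<Rightarrow> bool" where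
  "minimal_sys A B C D \<longleftrightarrow>
     (\<forall>z::complex.
        vec_space.rank (dim_row A) (hcat (z \<cdot>\<^sub>m 1\<^sub>m (dim_row A) - A) B) = dim_row A \<and>
        vec_space.rank (dim_row A) (hcat (z \<cdot>\<^sub>m 1\<^sub>m (dim_row A) - adj A) (adj C)) = dim_row A)"

definition passive_sys :: "complex mat \<Rightarrow> complex mat \<Rightarrow> complex mat \<Rightarrow> complex mat \<Rightarrow> bool" where
  "passive_sys A B C D \<longleftrightarrow>
     (\<forall>\<omega>::real. -pi \<le> \<omega> \<and> \<omega> \<le> pi \<and> \<not> eigenvalue A (cis \<omega>) \<longrightarrow>
        psd (adj (transfer A B C D (cis \<omega>)) + transfer A B C D (cis \<omega>))) \<and>
     (\<forall>ev. eigenvalue A ev \<longrightarrow> cmod ev \<le> 1 \<and> (cmod ev = 1 \<longrightarrow> semisimple_eig A ev))"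

definition Wmat :: "complex mat \<Rightarrow> complex mat \<Rightarrow> complex mat \<Rightarrow> complex mat \<Rightarrow> complex mat \<Rightarrow> complex mat" where
  "Wmat X A B C D = four_block_mat
     (X - adj A * X * A) (adj C - adj A * X * B)
     (C - adj B * X * A) (adj D + D - adj B * X * B)"

definition Wtilde :: "complex mat \<Rightarrow> complex mat \<Rightarrow> complex mat \<Rightarrow> complex mat \<Rightarrow> complex mat \<Rightarrow> complex mat" where
  "Wtilde X A B C D = blk3
     X (X * A) (X * B)
     (adj A * X) X (adj C)
     (adj B * X) C (adj D + D)"

definition Xpos :: "complex mat \<Rightarrow> complex mat \<Rightarrow> complex mat \<Rightarrow> complex mat \<Rightarrow> complex mat set" where
  "Xpos A B C D = {X. X \<in> carrier_mat (dim_row A) (dim_row A) \<and> hermitian X \<and>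
                      psd (Wmat X A B C D) \<and> pd X}"

definition diagXX2 :: "complex mat \<Rightarrow> nat \<Rightarrow> complex mat" where
  "diagXX2 X m = blk3 X (0\<^sub>m (dim_row X) (dim_row X)) (0\<^sub>m (dim_row X) m)
                      (0\<^sub>m (dim_row X) (dim_row X)) X (0\<^sub>m (dim_row X) m)
                      (0\<^sub>m m (dim_row X)) (0\<^sub>m m (dim_row X)) (2 \<cdot>\<^sub>m 1\<^sub>m m)"

definition Ds :: "nat \<Rightarrow> nat \<Rightarrow> complex mat" where
  "Ds n m = blk3 (1\<^sub>m n) (0\<^sub>m n n) (0\<^sub>m n m)
                 (0\<^sub>m n n) (1\<^sub>m n) (0\<^sub>m n m)
                 (0\<^sub>m m n) (0\<^sub>m m n) (complex_of_real (1 / sqrt 2) \<cdot>\<^sub>m 1\<^sub>m m)"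

definition xi_set :: "complex mat \<Rightarrow> complex mat \<Rightarrow> complex mat \<Rightarrow> complex mat \<Rightarrow> complex mat \<Rightarrow> real set" where
  "xi_set X A B C D = {\<xi>. loewner_ge (Wtilde X A B C D) (complex_of_real \<xi> \<cdot>\<^sub>m diagXX2 X (dim_row D))}"

end

theory Submission
  imports Defs
begin

lemma adj_carrier[simp]: "M \<in> carrier_mat a b \<Longrightarrow> adj M \<in> carrier_mat b a"
  unfolding adj_def by auto
lemma adj_dims[simp]: "dim_row (adj M) = dim_col M" "dim_col (adj M) = dim_row M"
  unfolding adj_def by auto
lemma adj_index[simp]: "i < dim_col M \<Longrightarrow> j < dim_row M \<Longrightarrow> adj M $$ (i,j) = cnj (M $$ (j,i))"
  unfolding adj_def by auto
lemma adj_adj[simp]: "adj (adj M) = M"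
  by (rule eq_matI) auto
lemma adj_one[simp]: "adj (1\<^sub>m n) = 1\<^sub>m n"
  by (rule eq_matI) auto
lemma adj_zero[simp]: "adj (0\<^sub>m a b) = 0\<^sub>m b a"
  by (rule eq_matI) auto
lemma adj_add: "A \<in> carrier_mat a b \<Longrightarrow> B \<in> carrier_mat a b \<Longrightarrow> adj (A + B) = adj A + adj B"
  by (rule eq_matI) auto
lemma adj_minus: "A \<in> carrier_mat a b \<Longrightarrow> B \<in> carrier_mat a b \<Longrightarrow> adj (A - B) = adj A - adj B"
  by (rule eq_matI) auto
lemma adj_smult: "adj (c \<cdot>\<^sub>m A) = cnj c \<cdot>\<^sub>m adj A"
  by (rule eq_matI) auto
lemma adj_mult: assumes "A \<in> carrier_mat a b" "B \<in> carrier_mat b c"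
  shows "adj (A * B) = adj B * adj A"
proof (rule eq_matI)
  fix i j assume ij: "i < dim_row (adj B * adj A)" "j < dim_col (adj B * adj A)"
  then have i: "i < c" and j: "j < a" using assms by auto
  have "adj (A * B) $$ (i,j) = cnj (\<Sum>k=0..<b. A $$ (j,k) * B $$ (k,i))"
    using assms i j by (simp add: scalar_prod_def)
  also have "\<dots> = (\<Sum>k=0..<b. cnj (B $$ (k,i)) * cnj (A $$ (j,k)))"
    by (simp add: mult.commute)
  also have "\<dots> = (adj B * adj A) $$ (i,j)"
    using assms i j by (simp add: scalar_prod_def)
  finally show "adj (A * B) $$ (i,j) = (adj B * adj A) $$ (i,j)" .
qed (use assms in auto)

lemma hermitian_adj: "hermitian M \<Longrightarrow> adj M = M" unfolding hermitian_def by auto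

definition Q :: "complex mat \<Rightarrow> complex vec \<Rightarrow> complex" where
  "Q P v = conjugate v \<bullet> (P *\<^sub>v v)"

definition nrm2 :: "complex vec \<Rightarrow> real" where
  "nrm2 v = (\<Sum>i<dim_vec v. (cmod (v $ i))^2)"

lemma nrm2_nonneg: "nrm2 v \<ge> 0" unfolding nrm2_def by (auto intro: sum_nonneg)

lemma conj_sprod_self: "conjugate v \<bullet> v = complex_of_real (nrm2 v)"
proof -
  have "conjugate v \<bullet> v = (\<Sum>i=0..<dim_vec v. cnj (v$i) * v$i)"
    unfolding scalar_prod_def by simp
  also have "\<dots> = (\<Sum>i=0..<dim_vec v. complex_of_real ((cmod (v $ i))^2))"
    by (rule sum.cong) (auto simp: complex_norm_square[symmetric] mult.commute)
  also have "\<dots> = complex_of_real (nrm2 v)" unfolding nrm2_def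
    by (simp add: lessThan_atLeast0)
  finally show ?thesis .
qed

lemma nrm2_zero: assumes "v \<in> carrier_vec N" "nrm2 v = 0" shows "v = 0\<^sub>v N"
proof (rule eq_vecI)
  fix i assume "i < dim_vec (0\<^sub>v N)"
  then have i: "i < dim_vec v" using assms by auto
  have "(\<Sum>i<dim_vec v. (cmod (v $ i))^2) = 0" using assms unfolding nrm2_def by auto
  then have "\<forall>i\<in>{..<dim_vec v}. (cmod (v $ i))^2 = 0"
    by (subst (asm) sum_nonneg_eq_0_iff) auto
  then show "v $ i = 0\<^sub>v N $ i" using i assms by auto
qed (use assms in auto)

lemma sprod_adj: assumes S: "S \<in> carrier_mat N N" and v: "v \<in> carrier_vec N" and w: "w \<in> carrier_vec N"
  shows "conjugate v \<bullet> (adj S *\<^sub>v w) = conjugate (S *\<^sub>v v) \<bullet> w"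
proof -
  have "conjugate v \<bullet> (adj S *\<^sub>v w) = (\<Sum>i=0..<N. cnj (v$i) * (\<Sum>k=0..<N. cnj (S$$(k,i)) * w$k))"
    using S v w by (simp add: scalar_prod_def)
  also have "\<dots> = (\<Sum>i=0..<N. \<Sum>k=0..<N. cnj (v$i) * cnj (S$$(k,i)) * w$k)"
    by (simp add: sum_distrib_left mult.assoc)
  also have "\<dots> = (\<Sum>k=0..<N. \<Sum>i=0..<N. cnj (v$i) * cnj (S$$(k,i)) * w$k)"
    by (rule sum.swap)
  also have "\<dots> = (\<Sum>k=0..<N. (\<Sum>i=0..<N. cnj (v$i) * cnj (S$$(k,i))) * w$k)"
    by (simp add: sum_distrib_right)
  also have "\<dots> = (\<Sum>k=0..<N. cnj (\<Sum>i=0..<N. S$$(k,i) * v$i) * w$k)"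
    by (rule sum.cong[OF refl]) (simp add: mult.commute)
  also have "\<dots> = conjugate (S *\<^sub>v v) \<bullet> w"
    using S v w by (simp add: scalar_prod_def)
  finally show ?thesis .
qed

lemma Q_congr: assumes S: "S \<in> carrier_mat N N" and P: "P \<in> carrier_mat N N" and v: "v \<in> carrier_vec N"
  shows "Q (adj S * P * S) v = Q P (S *\<^sub>v v)"
proof -
  have "(adj S * P * S) *\<^sub>v v = adj S *\<^sub>v (P *\<^sub>v (S *\<^sub>v v))"
  proof -
    have "(adj S * P * S) *\<^sub>v v = (adj S * P) *\<^sub>v (S *\<^sub>v v)"
      by (rule assoc_mult_mat_vec[of _ N N]) (use S P v in auto)
    also have "\<dots> = adj S *\<^sub>v (P *\<^sub>v (S *\<^sub>v v))"
      by (rule assoc_mult_mat_vec[of _ N N]) (use S P v in auto)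
    finally show ?thesis .
  qed
  then show ?thesis unfolding Q_def using sprod_adj[OF S v, of "P *\<^sub>v (S *\<^sub>v v)"] S P v by simp
qed

lemma mult_carrier_sq[simp]: "A \<in> carrier_mat N N \<Longrightarrow> B \<in> carrier_mat N N \<Longrightarrow> A * B \<in> carrier_mat N N"
  by auto

lemma smult_one_mat_vec: "v \<in> carrier_vec N \<Longrightarrow> (c \<cdot>\<^sub>m 1\<^sub>m N) *\<^sub>v v = c \<cdot>\<^sub>v (v::complex vec)"
  apply (rule eq_vecI) apply (auto simp: scalar_prod_def)
  apply (subst sum.cong[OF refl, where h = "\<lambda>ia. if ia = i then c * v $ i else 0"])
   apply auto
  done

lemma psdD: "psd P \<Longrightarrow> P \<in> carrier_mat N N \<Longrightarrow> v \<in> carrier_vec N \<Longrightarrow> Re (Q P v) \<ge> 0"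
  unfolding psd_def Q_def by auto

lemma psdI: "P \<in> carrier_mat N N \<Longrightarrow> adj P = P \<Longrightarrow> (\<And>v. v \<in> carrier_vec N \<Longrightarrow> Re (Q P v) \<ge> 0) \<Longrightarrow> psd P"
  unfolding psd_def Q_def hermitian_def by auto

lemma psd_congr: assumes "psd P" "P \<in> carrier_mat N N" "S \<in> carrier_mat N N"
  shows "psd (adj S * P * S)"
proof (rule psdI)
  show "adj S * P * S \<in> carrier_mat N N" using assms by auto
  have "adj P = P" using assms unfolding psd_def hermitian_def by auto
  then show "adj (adj S * P * S) = adj S * P * S" using assms
    by (simp add: adj_mult[of _ N N _ N] mult_carrier_mat assoc_mult_mat[of _ N N _ N _ N])
  fix v :: "complex vec" assume "v \<in> carrier_vec N"
  then show "Re (Q (adj S * P * S) v) \<ge> 0" using assms Q_congr psdD by auto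
qed

lemma psd_congr_iff: assumes P: "P \<in> carrier_mat N N" and S: "S \<in> carrier_mat N N"
  and K: "K \<in> carrier_mat N N" and SK: "S * K = 1\<^sub>m N"
  shows "psd (adj S * P * S) \<longleftrightarrow> psd P"
proof
  assume h: "psd (adj S * P * S)"
  have "adj K * (adj S * P * S) * K = (adj (S * K)) * P * (S * K)"
    using P S K by (simp add: adj_mult[of _ N N _ N] assoc_mult_mat[of _ N N _ N _ N])
  also have "\<dots> = P" using SK P by simp
  finally have eq: "adj K * (adj S * P * S) * K = P" .
  have "psd (adj K * (adj S * P * S) * K)" using psd_congr[OF h _ K] P S by auto
  then show "psd P" using eq by simp
qed (use psd_congr P S in auto)

lemma Q_shift: assumes "M \<in> carrier_mat N N" "v \<in> carrier_vec N"
  shows "Q (M - c \<cdot>\<^sub>m 1\<^sub>m N) v = Q M v - c * complex_of_real (nrm2 v)"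
proof -
  have "(M - c \<cdot>\<^sub>m 1\<^sub>m N) *\<^sub>v v = M *\<^sub>v v - c \<cdot>\<^sub>v v"
    using assms by (simp add: minus_mult_distrib_mat_vec[of _ N N] smult_one_mat_vec)
  then show ?thesis unfolding Q_def using assms
    by (simp add: scalar_prod_minus_distrib[of _ N] conj_sprod_self[symmetric])
qed

lemma herm_sprod: assumes P: "P \<in> carrier_mat N N" "adj P = P" and v: "v \<in> carrier_vec N" and w: "w \<in> carrier_vec N"
  shows "conjugate v \<bullet> (P *\<^sub>v w) = cnj (conjugate w \<bullet> (P *\<^sub>v v))"
proof -
  have "conjugate v \<bullet> (P *\<^sub>v w) = conjugate v \<bullet> (adj P *\<^sub>v w)" using P by simp
  also have "\<dots> = conjugate (P *\<^sub>v v) \<bullet> w" using sprod_adj[OF P(1) v w] .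
  also have "\<dots> = cnj (conjugate w \<bullet> (P *\<^sub>v v))"
    using P v w by (simp add: scalar_prod_def mult.commute)
  finally show ?thesis .
qed

lemma Q_expand: assumes P: "P \<in> carrier_mat N N" "adj P = P" and v: "v \<in> carrier_vec N" and w: "w \<in> carrier_vec N"
  shows "Q P (v + s \<cdot>\<^sub>v w) = Q P v + cnj s * (conjugate w \<bullet> (P *\<^sub>v v))
           + s * cnj (conjugate w \<bullet> (P *\<^sub>v v)) + cnj s * s * Q P w"
proof -
  have c: "conjugate (v + s \<cdot>\<^sub>v w) = conjugate v + cnj s \<cdot>\<^sub>v conjugate w"
    using v w by (simp add: conjugate_add_vec[of _ N] conjugate_smult_vec)
  have m: "P *\<^sub>v (v + s \<cdot>\<^sub>v w) = P *\<^sub>v v + s \<cdot>\<^sub>v (P *\<^sub>v w)"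
    using P v w by (simp add: mult_add_distrib_mat_vec[of _ N N] mult_mat_vec[of _ N N])
  have "Q P (v + s \<cdot>\<^sub>v w) = (conjugate v + cnj s \<cdot>\<^sub>v conjugate w) \<bullet> (P *\<^sub>v v + s \<cdot>\<^sub>v (P *\<^sub>v w))"
    unfolding Q_def c m ..
  also have "\<dots> = conjugate v \<bullet> (P *\<^sub>v v) + s * (conjugate v \<bullet> (P *\<^sub>v w))
      + cnj s * (conjugate w \<bullet> (P *\<^sub>v v)) + cnj s * s * (conjugate w \<bullet> (P *\<^sub>v w))"
    using P v w
    by (simp add: add_scalar_prod_distrib[of _ N] scalar_prod_add_distrib[of _ N] algebra_simps)
  also have "conjugate v \<bullet> (P *\<^sub>v w) = cnj (conjugate w \<bullet> (P *\<^sub>v v))"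
    by (rule herm_sprod[OF P v w])
  finally show ?thesis unfolding Q_def by (simp add: algebra_simps)
qed

lemma psd_herm: "psd P \<Longrightarrow> adj P = P"
  unfolding psd_def hermitian_def by auto

lemma zero_quad: assumes psd: "psd P" and P: "P \<in> carrier_mat N N" and v: "v \<in> carrier_vec N"
  and q0: "Re (Q P v) = 0"
  shows "P *\<^sub>v v = 0\<^sub>v N"
proof -
  define w where "w = P *\<^sub>v v"
  have w: "w \<in> carrier_vec N" using P v unfolding w_def by auto
  have adjP: "adj P = P" using psd_herm[OF psd] by auto
  have beta: "conjugate w \<bullet> (P *\<^sub>v v) = complex_of_real (nrm2 w)"
    unfolding w_def[symmetric] by (rule conj_sprod_self)
  define q where "q = Re (Q P w)"
  have q: "q \<ge> 0" unfolding q_def using psdD[OF psd P w] .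
  have key: "2 * t * nrm2 w \<le> t * t * q" if t: "t > 0" for t :: real
  proof -
    have vw: "v + complex_of_real (-t) \<cdot>\<^sub>v w \<in> carrier_vec N" using v w by auto
    have "0 \<le> Re (Q P (v + complex_of_real (-t) \<cdot>\<^sub>v w))" using psdD[OF psd P vw] .
    also have "\<dots> = - 2 * t * nrm2 w + t * t * q"
      unfolding Q_expand[OF P adjP v w] beta q_def using q0 by simp
    finally show ?thesis by simp
  qed
  have "nrm2 w = 0"
  proof (rule ccontr)
    assume "nrm2 w \<noteq> 0"
    then have pos: "nrm2 w > 0" using nrm2_nonneg[of w] by auto
    define t where "t = nrm2 w / (q + 1)"
    have t: "t > 0" unfolding t_def using pos q by auto
    have "2 * t * nrm2 w \<le> t * t * q" using key[OF t] .
    then have "2 * nrm2 w \<le> t * q" using t by (simp add: mult.assoc)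
    also have "t * q < nrm2 w" unfolding t_def using pos q
      by (simp add: field_simps)
    finally show False using pos by simp
  qed
  then show ?thesis using nrm2_zero[OF w] unfolding w_def by auto
qed

lemma conj_unit_vec[simp]: "conjugate (unit_vec N i :: complex vec) = unit_vec N i"
  by (rule eq_vecI) (auto simp: unit_vec_def)

lemma zero_diag: assumes psd: "psd P" and P: "P \<in> carrier_mat N N" and i: "i < N" and j: "j < N"
  and d: "P $$ (i,i) = 0"
  shows "P $$ (j,i) = 0" "P $$ (i,j) = 0"
proof -
  have e: "unit_vec N i \<in> carrier_vec N" by simp
  have "Q P (unit_vec N i) = P $$ (i,i)" unfolding Q_def using P i by simp
  then have "P *\<^sub>v unit_vec N i = 0\<^sub>v N" using zero_quad[OF psd P e] d by simp
  then have "(P *\<^sub>v unit_vec N i) $ j = 0" using j by simp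
  then show ji: "P $$ (j,i) = 0" using P i j by simp
  have "adj P = P" using psd_herm[OF psd] by auto
  then have "P $$ (i,j) = cnj (P $$ (j,i))" using P i j by (metis adj_index carrier_matD)
  then show "P $$ (i,j) = 0" using ji by simp
qed

lemma adj_four_block: assumes "A \<in> carrier_mat a c" "B \<in> carrier_mat a d" "C \<in> carrier_mat b c" "D \<in> carrier_mat b d"
  shows "adj (four_block_mat A B C D) = four_block_mat (adj A) (adj C) (adj B) (adj D)"
  by (rule eq_matI) (use assms in auto)

lemma conjugate_append: "conjugate (a @\<^sub>v b) = conjugate a @\<^sub>v (conjugate b :: complex vec)"
  by (rule eq_vecI) (auto simp: conjugate_vec_def)

lemma det_inv: fixes T :: "complex mat" assumes T: "T \<in> carrier_mat n n" and d: "det T \<noteq> 0"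
  shows "\<exists>K \<in> carrier_mat n n. T * K = 1\<^sub>m n \<and> K * T = 1\<^sub>m n"
proof -
  have "T \<in> Units (ring_mat TYPE(complex) n ())" by (rule det_non_zero_imp_unit[OF T d])
  then show ?thesis unfolding Units_def ring_mat_simps by auto
qed

lemma inv_det: assumes T: "T \<in> carrier_mat n n" and K: "K \<in> carrier_mat n n" and TK: "T * K = 1\<^sub>m n"
  shows "det T \<noteq> (0::complex)"
proof
  assume "det T = 0"
  then have "det (T * K) = 0" using det_mult[OF T K] by simp
  then show False using TK by simp
qed

lemma pd_psd: assumes "pd X" shows "psd X"
  unfolding psd_def
proof (intro conjI ballI)
  show "hermitian X" using assms unfolding pd_def by auto
  fix v :: "complex vec" assume v: "v \<in> carrier_vec (dim_row X)"
  show "0 \<le> Re (conjugate v \<bullet> (X *\<^sub>v v))"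
  proof (cases "v = 0\<^sub>v (dim_row X)")
    case True
    then show ?thesis by (simp add: scalar_prod_def)
  next
    case False
    then show ?thesis using assms v unfolding pd_def by force
  qed
qed

lemma smult_1_mat[simp]: "1 \<cdot>\<^sub>m A = (A :: complex mat)"
  by (rule eq_matI) auto
lemma smult_smult_mat: "a \<cdot>\<^sub>m (b \<cdot>\<^sub>m A) = (a * b) \<cdot>\<^sub>m (A :: complex mat)"
  by (rule eq_matI) auto
lemma smult_one_mult: "A \<in> carrier_mat k l \<Longrightarrow> (a \<cdot>\<^sub>m 1\<^sub>m k) * A = a \<cdot>\<^sub>m (A :: complex mat)"
  by (simp add: mult_smult_assoc_mat[of _ k k])
lemma mult_smult_one: "A \<in> carrier_mat k l \<Longrightarrow> A * (a \<cdot>\<^sub>m 1\<^sub>m l) = a \<cdot>\<^sub>m (A :: complex mat)"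
  using mult_smult_distrib[of A k l "1\<^sub>m l" l a] by simp
lemma smult_mat_vec: "A \<in> carrier_mat k l \<Longrightarrow> v \<in> carrier_vec l \<Longrightarrow> (a \<cdot>\<^sub>m A) *\<^sub>v v = a \<cdot>\<^sub>v (A *\<^sub>v (v :: complex vec))"
  by (rule eq_vecI) (auto simp: scalar_prod_def sum_distrib_left mult.assoc)

lemma cholesky: "X \<in> carrier_mat n n \<Longrightarrow> pd X \<Longrightarrow>
   (\<exists>T \<in> carrier_mat n n. \<exists>K \<in> carrier_mat n n. T * K = 1\<^sub>m n \<and> K * T = 1\<^sub>m n \<and> X = adj T * T)"
proof (induction n arbitrary: X)
  case 0
  have "X = adj (1\<^sub>m 0) * 1\<^sub>m 0" by (rule eq_matI) (use 0 in auto)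
  then show ?case by (intro bexI[of _ "1\<^sub>m 0"]) auto
next
  case (Suc n X)
  have Xc: "X \<in> carrier_mat (1 + n) (1 + n)" using Suc by simp
  obtain X1 X2 X3 X4 where sb: "split_block X 1 1 = (X1,X2,X3,X4)" by (cases "split_block X 1 1") auto
  have X1: "X1 \<in> carrier_mat 1 1" and X2: "X2 \<in> carrier_mat 1 n" and X3: "X3 \<in> carrier_mat n 1"
    and X4: "X4 \<in> carrier_mat n n" and Xeq: "X = four_block_mat X1 X2 X3 X4"
    using split_block[OF sb, of n n] Xc by auto
  have X1d: "X1 = mat 1 1 (\<lambda>ij. X $$ ij)" and X2d: "X2 = mat 1 n (\<lambda>(i,j). X $$ (i, j+1))"
    and X3d: "X3 = mat n 1 (\<lambda>(i,j). X $$ (i+1, j))" and X4d: "X4 = mat n n (\<lambda>(i,j). X $$ (i+1, j+1))"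
    using sb Xc unfolding split_block_def Let_def by auto
  have adjX: "adj X = X" using Suc.prems(2) unfolding pd_def hermitian_def by auto
  have Xh: "cnj (X $$ (j,i)) = X $$ (i,j)" if "i < Suc n" "j < Suc n" for i j
    using adj_index[of i X j] that Suc.prems(1) adjX by auto
  have blocks: "adj X1 = X1" "adj X3 = X2" "adj X2 = X3" "adj X4 = X4"
    unfolding X1d X2d X3d X4d by (rule eq_matI; auto simp: Xh)+
  define x where "x = X $$ (0,0)"
  have e0: "unit_vec (Suc n) 0 \<in> carrier_vec (Suc n)" "unit_vec (Suc n) 0 \<noteq> 0\<^sub>v (Suc n)" by auto
  have pdX: "\<forall>v\<in>carrier_vec (Suc n). v \<noteq> 0\<^sub>v (Suc n) \<longrightarrow> 0 < Re (conjugate v \<bullet> (X *\<^sub>v v))"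
    using Suc.prems unfolding pd_def by auto
  have "0 < Re (conjugate (unit_vec (Suc n) 0) \<bullet> (X *\<^sub>v unit_vec (Suc n) 0))"
    using pdX e0 by blast
  also have "conjugate (unit_vec (Suc n) 0) \<bullet> (X *\<^sub>v unit_vec (Suc n) 0) = x"
    using Suc.prems(1) unfolding x_def by simp
  finally have xpos: "0 < Re x" .
  have "cnj x = x" unfolding x_def using Xh[of 0 0] by simp
  then have "Im x = 0" by (metis cnj.sel(2) complex.expand neg_equal_zero)
  define r where "r = Re x"
  have r: "r > 0" using xpos r_def by auto
  have xr: "x = complex_of_real r" using \<open>Im x = 0\<close> r_def by (simp add: complex_eq_iff)
  have X1eq: "X1 = complex_of_real r \<cdot>\<^sub>m 1\<^sub>m 1"
    unfolding X1d by (rule eq_matI) (auto simp: x_def[symmetric] xr)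
  define c where "c = complex_of_real (1/r)"
  have rc: "complex_of_real r * c = 1" unfolding c_def using r by (simp flip: of_real_mult)
  have cc: "cnj c = c" unfolding c_def by simp
  define S where "S = X4 - c \<cdot>\<^sub>m (X3 * X2)"
  have Sc: "S \<in> carrier_mat n n" unfolding S_def using X2 X3 X4 by auto
  have adjS: "adj S = S" unfolding S_def
    using X2 X3 X4 blocks cc
    by (simp add: adj_minus[of _ n n] adj_smult adj_mult[of _ n 1 _ n])
  have pdS: "pd S" unfolding pd_def
  proof (intro conjI ballI impI)
    show "hermitian S" unfolding hermitian_def using Sc adjS by auto
    fix y :: "complex vec" assume y: "y \<in> carrier_vec (dim_row S)" and y0: "y \<noteq> 0\<^sub>v (dim_row S)"
    have yc: "y \<in> carrier_vec n" using y Sc by auto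
    define a where "a = (- c) \<cdot>\<^sub>v (X2 *\<^sub>v y)"
    have ac: "a \<in> carrier_vec 1" unfolding a_def using X2 yc by auto
    define v where "v = a @\<^sub>v y"
    have vc: "v \<in> carrier_vec (Suc n)" unfolding v_def using append_carrier_vec[OF ac yc] by simp
    have v0: "v \<noteq> 0\<^sub>v (Suc n)"
    proof
      assume "v = 0\<^sub>v (Suc n)"
      then have vz: "v $ (1 + i) = 0" if "i < n" for i using that by simp
      have "y $ i = v $ (1 + i)" if "i < n" for i unfolding v_def using ac yc that by simp
      then have "y = 0\<^sub>v n" using vz yc by (intro eq_vecI) auto
      then show False using y0 Sc by auto
    qed
    have Xv: "X *\<^sub>v v = (X1 *\<^sub>v a + X2 *\<^sub>v y) @\<^sub>v (X3 *\<^sub>v a + X4 *\<^sub>v y)"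
      unfolding v_def Xeq by (rule four_block_mat_mult_vec[OF X1 X2 X3 X4 ac yc])
    have top: "X1 *\<^sub>v a + X2 *\<^sub>v y = 0\<^sub>v 1"
    proof -
      have "X1 *\<^sub>v a = complex_of_real r \<cdot>\<^sub>v a" unfolding X1eq by (rule smult_one_mat_vec[OF ac])
      also have "\<dots> = (- 1) \<cdot>\<^sub>v (X2 *\<^sub>v y)" unfolding a_def
        by (rule eq_vecI) (auto simp: rc mult.assoc[symmetric])
      finally show ?thesis using X2 yc by (intro eq_vecI) auto
    qed
    have bot: "X3 *\<^sub>v a + X4 *\<^sub>v y = S *\<^sub>v y"
    proof -
      have "X3 *\<^sub>v a = (- c) \<cdot>\<^sub>v (X3 *\<^sub>v (X2 *\<^sub>v y))"
        unfolding a_def using X2 X3 yc by (simp add: mult_mat_vec[of _ n 1])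
      also have "\<dots> = (- c) \<cdot>\<^sub>v ((X3 * X2) *\<^sub>v y)" using X2 X3 yc by simp
      finally have 1: "X3 *\<^sub>v a = (- c) \<cdot>\<^sub>v ((X3 * X2) *\<^sub>v y)" .
      have "S *\<^sub>v y = X4 *\<^sub>v y - (c \<cdot>\<^sub>m (X3 * X2)) *\<^sub>v y"
        unfolding S_def using X2 X3 X4 yc by (simp add: minus_mult_distrib_mat_vec[of _ n n])
      also have "\<dots> = X4 *\<^sub>v y - c \<cdot>\<^sub>v ((X3 * X2) *\<^sub>v y)"
        using X2 X3 yc by (simp add: smult_mat_vec[of _ n n])
      finally show ?thesis unfolding 1 using X2 X3 X4 yc
        by (intro eq_vecI) auto
    qed
    have Xv': "X *\<^sub>v v = 0\<^sub>v 1 @\<^sub>v (S *\<^sub>v y)" using Xv top bot by simp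
    have "Q X v = (conjugate a @\<^sub>v conjugate y) \<bullet> (0\<^sub>v 1 @\<^sub>v (S *\<^sub>v y))"
      unfolding Q_def Xv' unfolding v_def conjugate_append ..
    also have "\<dots> = conjugate a \<bullet> 0\<^sub>v 1 + conjugate y \<bullet> (S *\<^sub>v y)"
      by (rule scalar_prod_append[of _ 1 _ n]) (use ac yc Sc in auto)
    also have "\<dots> = Q S y" using ac by (simp add: Q_def)
    finally have "Q X v = Q S y" .
    then show "0 < Re (conjugate y \<bullet> (S *\<^sub>v y))"
      using Suc.prems vc v0 unfolding pd_def Q_def by auto
  qed
  obtain T' K' where T': "T' \<in> carrier_mat n n" and K': "K' \<in> carrier_mat n n"
    and TK': "T' * K' = 1\<^sub>m n" and KT': "K' * T' = 1\<^sub>m n" and Seq: "S = adj T' * T'"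
    using Suc.IH[OF Sc pdS] by blast
  define sr where "sr = complex_of_real (sqrt r)"
  define isr where "isr = complex_of_real (1 / sqrt r)"
  have sr: "sr * sr = complex_of_real r" "sr * isr = 1" "isr * isr = c" "cnj sr = sr" "cnj isr = isr"
    "sr \<noteq> 0"
    unfolding sr_def isr_def c_def using r by (simp_all flip: of_real_mult add: real_sqrt_mult[symmetric])
  define T where "T = four_block_mat (sr \<cdot>\<^sub>m 1\<^sub>m 1) (isr \<cdot>\<^sub>m X2) (0\<^sub>m n 1) T'"
  have Tc: "T \<in> carrier_mat (Suc n) (Suc n)" unfolding T_def using T' by auto
  have "det T = det (sr \<cdot>\<^sub>m 1\<^sub>m 1) * det T'"
    unfolding T_def by (rule det_four_block_mat_lower_left_zero_col) (use X2 T' in auto)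
  also have "\<dots> \<noteq> 0" using inv_det[OF T' K' TK'] sr by simp
  finally obtain K where K: "K \<in> carrier_mat (Suc n) (Suc n)" "T * K = 1\<^sub>m (Suc n)" "K * T = 1\<^sub>m (Suc n)"
    using det_inv[OF Tc] by blast
  have adjT: "adj T = four_block_mat (sr \<cdot>\<^sub>m 1\<^sub>m 1) (0\<^sub>m 1 n) (isr \<cdot>\<^sub>m X3) (adj T')"
    unfolding T_def using X2 T' blocks sr by (subst adj_four_block[of _ 1 1 _ n _ n]) (auto simp: adj_smult)
  have "adj T * T = four_block_mat (sr \<cdot>\<^sub>m 1\<^sub>m 1 * (sr \<cdot>\<^sub>m 1\<^sub>m 1) + 0\<^sub>m 1 n * 0\<^sub>m n 1)
      (sr \<cdot>\<^sub>m 1\<^sub>m 1 * (isr \<cdot>\<^sub>m X2) + 0\<^sub>m 1 n * T')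
      (isr \<cdot>\<^sub>m X3 * (sr \<cdot>\<^sub>m 1\<^sub>m 1) + adj T' * 0\<^sub>m n 1)
      (isr \<cdot>\<^sub>m X3 * (isr \<cdot>\<^sub>m X2) + adj T' * T')"
    unfolding adjT by (unfold T_def, rule mult_four_block_mat) (use X2 X3 T' in auto)
  also have "\<dots> = four_block_mat X1 X2 X3 X4"
  proof (rule cong_four_block_mat)
    show "sr \<cdot>\<^sub>m 1\<^sub>m 1 * (sr \<cdot>\<^sub>m 1\<^sub>m 1) + 0\<^sub>m 1 n * 0\<^sub>m n 1 = X1"
      unfolding X1eq using sr by (intro eq_matI) (auto simp: scalar_prod_def)
    show "sr \<cdot>\<^sub>m 1\<^sub>m 1 * (isr \<cdot>\<^sub>m X2) + 0\<^sub>m 1 n * T' = X2"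
    proof -
      have "sr \<cdot>\<^sub>m 1\<^sub>m 1 * (isr \<cdot>\<^sub>m X2) = sr \<cdot>\<^sub>m (isr \<cdot>\<^sub>m X2)"
        by (rule smult_one_mult) (use X2 in auto)
      then show ?thesis using X2 T' sr by (simp add: smult_smult_mat)
    qed
    show "isr \<cdot>\<^sub>m X3 * (sr \<cdot>\<^sub>m 1\<^sub>m 1) + adj T' * 0\<^sub>m n 1 = X3"
    proof -
      have "isr \<cdot>\<^sub>m X3 * (sr \<cdot>\<^sub>m 1\<^sub>m 1) = sr \<cdot>\<^sub>m (isr \<cdot>\<^sub>m X3)"
        by (rule mult_smult_one) (use X3 in auto)
      then show ?thesis using X3 T' sr by (simp add: smult_smult_mat)
    qed
    have "isr \<cdot>\<^sub>m X3 * (isr \<cdot>\<^sub>m X2) = c \<cdot>\<^sub>m (X3 * X2)"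
      using X2 X3 sr by (simp add: mult_smult_assoc_mat[of _ n 1] mult_smult_distrib[of _ n 1] smult_smult_mat)
    then show "isr \<cdot>\<^sub>m X3 * (isr \<cdot>\<^sub>m X2) + adj T' * T' = X4"
      unfolding Seq[symmetric] S_def using X2 X3 X4 by (intro eq_matI) auto
  qed
  finally have "X = adj T * T" using Xeq by simp
  then show ?case using Tc K by blast
qed

definition "b3ok M11 M12 M13 M21 M22 M23 M31 M32 M33 n1 n2 n3 \<longleftrightarrow>
  M11 \<in> carrier_mat n1 n1 \<and> M12 \<in> carrier_mat n1 n2 \<and> M13 \<in> carrier_mat n1 n3 \<and>
  M21 \<in> carrier_mat n2 n1 \<and> M22 \<in> carrier_mat n2 n2 \<and> M23 \<in> carrier_mat n2 n3 \<and>
  M31 \<in> carrier_mat n3 n1 \<and> M32 \<in> carrier_mat n3 n2 \<and> M33 \<in> carrier_mat n3 n3"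

lemma blk3_carrier[simp]:
  assumes "M11 \<in> carrier_mat n1 n1" "M22 \<in> carrier_mat n2 n2" "M33 \<in> carrier_mat n3 n3"
  shows "blk3 M11 M12 M13 M21 M22 M23 M31 M32 M33 \<in> carrier_mat (n1 + n2 + n3) (n1 + n2 + n3)"
  unfolding blk3_def using assms by auto

lemma blk3_dims[simp]: "dim_row (blk3 M11 M12 M13 M21 M22 M23 M31 M32 M33) = dim_row M11 + dim_row M22 + dim_row M33"
  "dim_col (blk3 M11 M12 M13 M21 M22 M23 M31 M32 M33) = dim_col M11 + dim_col M22 + dim_col M33"
  unfolding blk3_def by auto

lemma blk3_index:
  assumes ok: "b3ok M11 M12 M13 M21 M22 M23 M31 M32 M33 n1 n2 n3"
  and i: "i < n1 + n2 + n3" and j: "j < n1 + n2 + n3"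
  shows "blk3 M11 M12 M13 M21 M22 M23 M31 M32 M33 $$ (i,j) =
    (if i < n1 then (if j < n1 then M11 $$ (i,j) else if j < n1 + n2 then M12 $$ (i, j - n1) else M13 $$ (i, j - n1 - n2))
     else if i < n1 + n2 then (if j < n1 then M21 $$ (i - n1,j) else if j < n1 + n2 then M22 $$ (i - n1, j - n1) else M23 $$ (i - n1, j - n1 - n2))
     else (if j < n1 then M31 $$ (i - n1 - n2,j) else if j < n1 + n2 then M32 $$ (i - n1 - n2, j - n1) else M33 $$ (i - n1 - n2, j - n1 - n2)))"
  using ok i j unfolding b3ok_def blk3_def append_rows_def hcat_def
  by (auto simp: diff_diff_add)

lemma row_blk3:
  assumes ok: "b3ok M11 M12 M13 M21 M22 M23 M31 M32 M33 n1 n2 n3"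
  shows "i < n1 \<Longrightarrow> row (blk3 M11 M12 M13 M21 M22 M23 M31 M32 M33) i = (row M11 i @\<^sub>v row M12 i) @\<^sub>v row M13 i"
    "n1 \<le> i \<Longrightarrow> i < n1 + n2 \<Longrightarrow> row (blk3 M11 M12 M13 M21 M22 M23 M31 M32 M33) i = (row M21 (i-n1) @\<^sub>v row M22 (i-n1)) @\<^sub>v row M23 (i-n1)"
    "n1 + n2 \<le> i \<Longrightarrow> i < n1 + n2 + n3 \<Longrightarrow> row (blk3 M11 M12 M13 M21 M22 M23 M31 M32 M33) i = (row M31 (i-n1-n2) @\<^sub>v row M32 (i-n1-n2)) @\<^sub>v row M33 (i-n1-n2)"
  using ok blk3_carrier[of M11 n1 M22 n2 M33 n3] unfolding b3ok_def
  by (auto intro!: eq_vecI simp: blk3_index[OF ok] diff_diff_add)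

lemma col_blk3:
  assumes ok: "b3ok M11 M12 M13 M21 M22 M23 M31 M32 M33 n1 n2 n3"
  shows "j < n1 \<Longrightarrow> col (blk3 M11 M12 M13 M21 M22 M23 M31 M32 M33) j = (col M11 j @\<^sub>v col M21 j) @\<^sub>v col M31 j"
    "n1 \<le> j \<Longrightarrow> j < n1 + n2 \<Longrightarrow> col (blk3 M11 M12 M13 M21 M22 M23 M31 M32 M33) j = (col M12 (j-n1) @\<^sub>v col M22 (j-n1)) @\<^sub>v col M32 (j-n1)"
    "n1 + n2 \<le> j \<Longrightarrow> j < n1 + n2 + n3 \<Longrightarrow> col (blk3 M11 M12 M13 M21 M22 M23 M31 M32 M33) j = (col M13 (j-n1-n2) @\<^sub>v col M23 (j-n1-n2)) @\<^sub>v col M33 (j-n1-n2)"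
  using ok blk3_carrier[of M11 n1 M22 n2 M33 n3] unfolding b3ok_def
  by (auto intro!: eq_vecI simp: blk3_index[OF ok] diff_diff_add)

lemma row_carrier': "dim_col A = k \<Longrightarrow> row A i \<in> carrier_vec k" by auto
lemma col_carrier': "dim_row A = k \<Longrightarrow> col A i \<in> carrier_vec k" by auto

lemma sp3: assumes "a1 \<in> carrier_vec k1" "a2 \<in> carrier_vec k2" "a3 \<in> carrier_vec k3"
  "b1 \<in> carrier_vec k1" "b2 \<in> carrier_vec k2" "b3 \<in> carrier_vec k3"
  shows "((a1 @\<^sub>v a2) @\<^sub>v a3) \<bullet> ((b1 @\<^sub>v b2) @\<^sub>v b3) = a1 \<bullet> b1 + a2 \<bullet> b2 + a3 \<bullet> b3"
proof -
  have "((a1 @\<^sub>v a2) @\<^sub>v a3) \<bullet> ((b1 @\<^sub>v b2) @\<^sub>v b3) = (a1 @\<^sub>v a2) \<bullet> (b1 @\<^sub>v b2) + a3 \<bullet> b3"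
    by (rule scalar_prod_append[of _ "k1+k2" _ k3]) (use assms in auto)
  also have "(a1 @\<^sub>v a2) \<bullet> (b1 @\<^sub>v b2) = a1 \<bullet> b1 + a2 \<bullet> b2"
    by (rule scalar_prod_append) (use assms in auto)
  finally show ?thesis .
qed

lemma blk3_mult:
  assumes okP: "b3ok P11 P12 P13 P21 P22 P23 P31 P32 P33 n1 n2 n3"
  and okQ: "b3ok Q11 Q12 Q13 Q21 Q22 Q23 Q31 Q32 Q33 n1 n2 n3"
  shows "blk3 P11 P12 P13 P21 P22 P23 P31 P32 P33 * blk3 Q11 Q12 Q13 Q21 Q22 Q23 Q31 Q32 Q33 =
    blk3 (P11 * Q11 + P12 * Q21 + P13 * Q31) (P11 * Q12 + P12 * Q22 + P13 * Q32) (P11 * Q13 + P12 * Q23 + P13 * Q33)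
         (P21 * Q11 + P22 * Q21 + P23 * Q31) (P21 * Q12 + P22 * Q22 + P23 * Q32) (P21 * Q13 + P22 * Q23 + P23 * Q33)
         (P31 * Q11 + P32 * Q21 + P33 * Q31) (P31 * Q12 + P32 * Q22 + P33 * Q32) (P31 * Q13 + P32 * Q23 + P33 * Q33)"
    (is "?L = blk3 ?R11 ?R12 ?R13 ?R21 ?R22 ?R23 ?R31 ?R32 ?R33")
proof -
  have okR: "b3ok ?R11 ?R12 ?R13 ?R21 ?R22 ?R23 ?R31 ?R32 ?R33 n1 n2 n3"
    using okP okQ unfolding b3ok_def carrier_mat_def by auto
  have dP: "dim_row P11 = n1" "dim_col P11 = n1" "dim_row P12 = n1" "dim_col P12 = n2" "dim_row P13 = n1" "dim_col P13 = n3"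
    "dim_row P21 = n2" "dim_col P21 = n1" "dim_row P22 = n2" "dim_col P22 = n2" "dim_row P23 = n2" "dim_col P23 = n3"
    "dim_row P31 = n3" "dim_col P31 = n1" "dim_row P32 = n3" "dim_col P32 = n2" "dim_row P33 = n3" "dim_col P33 = n3"
    using okP unfolding b3ok_def carrier_mat_def by auto
  have dQ: "dim_row Q11 = n1" "dim_col Q11 = n1" "dim_row Q12 = n1" "dim_col Q12 = n2" "dim_row Q13 = n1" "dim_col Q13 = n3"
    "dim_row Q21 = n2" "dim_col Q21 = n1" "dim_row Q22 = n2" "dim_col Q22 = n2" "dim_row Q23 = n2" "dim_col Q23 = n3"
    "dim_row Q31 = n3" "dim_col Q31 = n1" "dim_row Q32 = n3" "dim_col Q32 = n2" "dim_row Q33 = n3" "dim_col Q33 = n3"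
    using okQ unfolding b3ok_def carrier_mat_def by auto
  show ?thesis
  proof (rule eq_matI)
    fix i j assume "i < dim_row (blk3 ?R11 ?R12 ?R13 ?R21 ?R22 ?R23 ?R31 ?R32 ?R33)"
      "j < dim_col (blk3 ?R11 ?R12 ?R13 ?R21 ?R22 ?R23 ?R31 ?R32 ?R33)"
    then have i: "i < n1 + n2 + n3" and j: "j < n1 + n2 + n3" using dP dQ by auto
    have "?L $$ (i,j) = row (blk3 P11 P12 P13 P21 P22 P23 P31 P32 P33) i \<bullet> col (blk3 Q11 Q12 Q13 Q21 Q22 Q23 Q31 Q32 Q33) j"
      using i j dP dQ by simp
    also have "\<dots> = blk3 ?R11 ?R12 ?R13 ?R21 ?R22 ?R23 ?R31 ?R32 ?R33 $$ (i,j)"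
      unfolding blk3_index[OF okR i j]
      using i j
      by (cases "i < n1"; cases "i < n1 + n2"; cases "j < n1"; cases "j < n1 + n2")
         (simp_all add: row_blk3[OF okP] col_blk3[OF okQ] sp3[of _ n1 _ n2 _ n3] dP dQ row_carrier' col_carrier')
    finally show "?L $$ (i,j) = blk3 ?R11 ?R12 ?R13 ?R21 ?R22 ?R23 ?R31 ?R32 ?R33 $$ (i,j)" .
  qed (use dP dQ in auto)
qed


lemma adj_blk3:
  assumes okP: "b3ok P11 P12 P13 P21 P22 P23 P31 P32 P33 n1 n2 n3"
  shows "adj (blk3 P11 P12 P13 P21 P22 P23 P31 P32 P33) =
    blk3 (adj P11) (adj P21) (adj P31) (adj P12) (adj P22) (adj P32) (adj P13) (adj P23) (adj P33)"
proof -
  have okR: "b3ok (adj P11) (adj P21) (adj P31) (adj P12) (adj P22) (adj P32) (adj P13) (adj P23) (adj P33) n1 n2 n3"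
    using okP unfolding b3ok_def by auto
  have dP: "dim_row P11 = n1" "dim_col P11 = n1" "dim_row P12 = n1" "dim_col P12 = n2" "dim_row P13 = n1" "dim_col P13 = n3"
    "dim_row P21 = n2" "dim_col P21 = n1" "dim_row P22 = n2" "dim_col P22 = n2" "dim_row P23 = n2" "dim_col P23 = n3"
    "dim_row P31 = n3" "dim_col P31 = n1" "dim_row P32 = n3" "dim_col P32 = n2" "dim_row P33 = n3" "dim_col P33 = n3"
    using okP unfolding b3ok_def carrier_mat_def by auto
  show ?thesis
  proof (rule eq_matI)
    fix i j assume "i < dim_row (blk3 (adj P11) (adj P21) (adj P31) (adj P12) (adj P22) (adj P32) (adj P13) (adj P23) (adj P33))"
      "j < dim_col (blk3 (adj P11) (adj P21) (adj P31) (adj P12) (adj P22) (adj P32) (adj P13) (adj P23) (adj P33))"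
    then have i: "i < n1 + n2 + n3" and j: "j < n1 + n2 + n3" using dP by auto
    show "adj (blk3 P11 P12 P13 P21 P22 P23 P31 P32 P33) $$ (i,j) =
      blk3 (adj P11) (adj P21) (adj P31) (adj P12) (adj P22) (adj P32) (adj P13) (adj P23) (adj P33) $$ (i,j)"
    proof -
      have "adj (blk3 P11 P12 P13 P21 P22 P23 P31 P32 P33) $$ (i,j) = cnj (blk3 P11 P12 P13 P21 P22 P23 P31 P32 P33 $$ (j,i))"
        by (rule adj_index) (use i j dP in auto)
      also have "\<dots> = blk3 (adj P11) (adj P21) (adj P31) (adj P12) (adj P22) (adj P32) (adj P13) (adj P23) (adj P33) $$ (i,j)"
        unfolding blk3_index[OF okR i j] blk3_index[OF okP j i]
        using i j dP by (auto simp: adj_index)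
      finally show ?thesis .
    qed
  qed (use dP in auto)
qed


lemma blk3_smult:
  assumes okP: "b3ok P11 P12 P13 P21 P22 P23 P31 P32 P33 n1 n2 n3"
  shows "c \<cdot>\<^sub>m blk3 P11 P12 P13 P21 P22 P23 P31 P32 P33 =
    blk3 (c \<cdot>\<^sub>m P11) (c \<cdot>\<^sub>m P12) (c \<cdot>\<^sub>m P13) (c \<cdot>\<^sub>m P21) (c \<cdot>\<^sub>m P22) (c \<cdot>\<^sub>m P23) (c \<cdot>\<^sub>m P31) (c \<cdot>\<^sub>m P32) (c \<cdot>\<^sub>m P33)"
    (is "?L = ?R")
proof -
  have okR: "b3ok (c \<cdot>\<^sub>m P11) (c \<cdot>\<^sub>m P12) (c \<cdot>\<^sub>m P13) (c \<cdot>\<^sub>m P21) (c \<cdot>\<^sub>m P22) (c \<cdot>\<^sub>m P23) (c \<cdot>\<^sub>m P31) (c \<cdot>\<^sub>m P32) (c \<cdot>\<^sub>m P33) n1 n2 n3"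
    using okP unfolding b3ok_def by auto
  have dP: "dim_row P11 = n1" "dim_col P11 = n1" "dim_row P12 = n1" "dim_col P12 = n2" "dim_row P13 = n1" "dim_col P13 = n3"
    "dim_row P21 = n2" "dim_col P21 = n1" "dim_row P22 = n2" "dim_col P22 = n2" "dim_row P23 = n2" "dim_col P23 = n3"
    "dim_row P31 = n3" "dim_col P31 = n1" "dim_row P32 = n3" "dim_col P32 = n2" "dim_row P33 = n3" "dim_col P33 = n3"
    using okP unfolding b3ok_def carrier_mat_def by auto
  show ?thesis
  proof (rule eq_matI)
    fix i j assume "i < dim_row ?R" "j < dim_col ?R"
    then have i: "i < n1 + n2 + n3" and j: "j < n1 + n2 + n3" using dP by auto
    have "?L $$ (i,j) = c * blk3 P11 P12 P13 P21 P22 P23 P31 P32 P33 $$ (i,j)"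
      using i j dP by simp
    then show "?L $$ (i,j) = ?R $$ (i,j)"
      unfolding blk3_index[OF okR i j] blk3_index[OF okP i j]
      using i j dP by auto
  qed (use dP in auto)
qed

lemma blk3_one: "blk3 (1\<^sub>m n1) (0\<^sub>m n1 n2) (0\<^sub>m n1 n3) (0\<^sub>m n2 n1) (1\<^sub>m n2) (0\<^sub>m n2 n3)
   (0\<^sub>m n3 n1) (0\<^sub>m n3 n2) (1\<^sub>m n3) = 1\<^sub>m (n1 + n2 + n3)"
proof -
  have ok: "b3ok (1\<^sub>m n1) (0\<^sub>m n1 n2) (0\<^sub>m n1 n3) (0\<^sub>m n2 n1) (1\<^sub>m n2) (0\<^sub>m n2 n3)
   (0\<^sub>m n3 n1) (0\<^sub>m n3 n2) (1\<^sub>m n3) n1 n2 n3" unfolding b3ok_def by auto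
  show ?thesis
    by (rule eq_matI) (auto simp: blk3_index[OF ok])
qed

lemma cmod_le_sqrt: assumes "j < dim_vec u" shows "cmod (u $ j) \<le> sqrt (nrm2 u)"
proof -
  have "(cmod (u $ j))^2 \<le> nrm2 u" unfolding nrm2_def
    by (rule member_le_sum[of j "{..<dim_vec u}" "\<lambda>i. (cmod (u $ i))^2"]) (use assms in auto)
  then show ?thesis by (simp add: real_le_rsqrt)
qed

lemma mat_vec_entry_bound: assumes K: "K \<in> carrier_mat N N" and u: "u \<in> carrier_vec N" and i: "i < N"
  shows "cmod ((K *\<^sub>v u) $ i) \<le> (\<Sum>j<N. cmod (K $$ (i,j))) * sqrt (nrm2 u)"
proof -
  have "(K *\<^sub>v u) $ i = (\<Sum>j<N. K $$ (i,j) * u $ j)"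
    using K u i by (simp add: scalar_prod_def lessThan_atLeast0)
  then have "cmod ((K *\<^sub>v u) $ i) \<le> (\<Sum>j<N. cmod (K $$ (i,j) * u $ j))"
    by (simp add: norm_sum)
  also have "\<dots> \<le> (\<Sum>j<N. cmod (K $$ (i,j)) * sqrt (nrm2 u))"
    by (rule sum_mono) (use u in \<open>auto simp: norm_mult intro!: mult_left_mono cmod_le_sqrt\<close>)
  also have "\<dots> = (\<Sum>j<N. cmod (K $$ (i,j))) * sqrt (nrm2 u)"
    by (simp add: sum_distrib_right)
  finally show ?thesis .
qed

lemma mat_vec_bound: assumes K: "K \<in> carrier_mat N N" and u: "u \<in> carrier_vec N"
  shows "nrm2 (K *\<^sub>v u) \<le> (\<Sum>i<N. (\<Sum>j<N. cmod (K $$ (i,j)))^2) * nrm2 u"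
proof -
  have "nrm2 (K *\<^sub>v u) = (\<Sum>i<N. (cmod ((K *\<^sub>v u) $ i))^2)" unfolding nrm2_def using K by simp
  also have "\<dots> \<le> (\<Sum>i<N. ((\<Sum>j<N. cmod (K $$ (i,j))) * sqrt (nrm2 u))^2)"
    by (rule sum_mono, rule power_mono) (use mat_vec_entry_bound[OF K u] in auto)
  also have "\<dots> = (\<Sum>i<N. (\<Sum>j<N. cmod (K $$ (i,j)))^2) * nrm2 u"
    by (simp add: power_mult_distrib sum_distrib_right[symmetric] nrm2_nonneg)
  finally show ?thesis .
qed

lemma Q_gram: assumes T: "T \<in> carrier_mat N N" and v: "v \<in> carrier_vec N"
  shows "Q (adj T * T) v = complex_of_real (nrm2 (T *\<^sub>v v))"
proof -
  have "(adj T * T) *\<^sub>v v = adj T *\<^sub>v (T *\<^sub>v v)" using T v by (simp add: assoc_mult_mat_vec[of _ N N])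
  then have "Q (adj T * T) v = conjugate (T *\<^sub>v v) \<bullet> (T *\<^sub>v v)"
    unfolding Q_def using sprod_adj[OF T v, of "T *\<^sub>v v"] T v by simp
  then show ?thesis by (simp add: conj_sprod_self)
qed

lemma pd_lower: assumes pd: "pd P" and P: "P \<in> carrier_mat N N"
  shows "\<exists>\<epsilon>>0. \<forall>v \<in> carrier_vec N. \<epsilon> * nrm2 v \<le> Re (Q P v)"
proof -
  obtain T K where T: "T \<in> carrier_mat N N" and K: "K \<in> carrier_mat N N" and KT: "K * T = 1\<^sub>m N"
    and PT: "P = adj T * T"
    using cholesky[OF P pd] by blast
  define c where "c = (\<Sum>i<N. (\<Sum>j<N. cmod (K $$ (i,j)))^2)"
  have c0: "c \<ge> 0" unfolding c_def by (auto intro: sum_nonneg)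
  show ?thesis
  proof (intro exI[of _ "1 / (c + 1)"] conjI ballI)
    show "0 < 1 / (c + 1)" using c0 by auto
    fix v :: "complex vec" assume v: "v \<in> carrier_vec N"
    have Tv: "T *\<^sub>v v \<in> carrier_vec N" using T v by auto
    have "v = K *\<^sub>v (T *\<^sub>v v)" using K T v KT by (simp flip: assoc_mult_mat_vec)
    then have "nrm2 v \<le> c * nrm2 (T *\<^sub>v v)" unfolding c_def using mat_vec_bound[OF K Tv] by simp
    also have "\<dots> \<le> (c + 1) * nrm2 (T *\<^sub>v v)" using nrm2_nonneg[of "T *\<^sub>v v"] by (simp add: mult_right_mono)
    finally have "1 / (c + 1) * nrm2 v \<le> nrm2 (T *\<^sub>v v)" using c0 by (simp add: field_simps)
    also have "nrm2 (T *\<^sub>v v) = Re (Q P v)" unfolding PT Q_gram[OF T v] by simp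
    finally show "1 / (c + 1) * nrm2 v \<le> Re (Q P v)" .
  qed
qed

lemma psd_det_pd: assumes psd: "psd P" and P: "P \<in> carrier_mat N N" and d: "det P \<noteq> 0"
  shows "pd P"
  unfolding pd_def
proof (intro conjI ballI impI)
  show "hermitian P" using psd unfolding psd_def by auto
  fix v :: "complex vec" assume v: "v \<in> carrier_vec (dim_row P)" and v0: "v \<noteq> 0\<^sub>v (dim_row P)"
  have vN: "v \<in> carrier_vec N" using v P by auto
  have ge: "Re (Q P v) \<ge> 0" using psdD[OF psd P vN] .
  show "0 < Re (conjugate v \<bullet> (P *\<^sub>v v))"
  proof (rule ccontr)
    assume "\<not> ?thesis"
    then have "Re (Q P v) = 0" using ge unfolding Q_def by auto
    then have "P *\<^sub>v v = 0\<^sub>v N" using zero_quad[OF psd P vN] by auto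
    then have "det P = 0" using det_0_iff_vec_prod_zero[OF P] vN v0 P by auto
    then show False using d by simp
  qed
qed

lemma herm_shift_adj: assumes M: "M \<in> carrier_mat N N" "adj M = M"
  shows "adj (M - complex_of_real \<xi> \<cdot>\<^sub>m 1\<^sub>m N) = M - complex_of_real \<xi> \<cdot>\<^sub>m 1\<^sub>m N"
  using M by (simp add: adj_minus[of _ N N] adj_smult)

lemma psd_shift_iff: assumes M: "M \<in> carrier_mat N N" "adj M = M"
  shows "psd (M - complex_of_real \<xi> \<cdot>\<^sub>m 1\<^sub>m N) \<longleftrightarrow> (\<forall>v \<in> carrier_vec N. \<xi> * nrm2 v \<le> Re (Q M v))"
proof
  assume h: "psd (M - complex_of_real \<xi> \<cdot>\<^sub>m 1\<^sub>m N)"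
  show "\<forall>v \<in> carrier_vec N. \<xi> * nrm2 v \<le> Re (Q M v)"
  proof
    fix v :: "complex vec" assume v: "v \<in> carrier_vec N"
    have "0 \<le> Re (Q (M - complex_of_real \<xi> \<cdot>\<^sub>m 1\<^sub>m N) v)" by (rule psdD[OF h _ v]) (use M in auto)
    then show "\<xi> * nrm2 v \<le> Re (Q M v)" using Q_shift[OF M(1) v] by simp
  qed
next
  assume h: "\<forall>v \<in> carrier_vec N. \<xi> * nrm2 v \<le> Re (Q M v)"
  show "psd (M - complex_of_real \<xi> \<cdot>\<^sub>m 1\<^sub>m N)"
  proof (rule psdI)
    show "M - complex_of_real \<xi> \<cdot>\<^sub>m 1\<^sub>m N \<in> carrier_mat N N" using M by auto
    show "adj (M - complex_of_real \<xi> \<cdot>\<^sub>m 1\<^sub>m N) = M - complex_of_real \<xi> \<cdot>\<^sub>m 1\<^sub>m N" by (rule herm_shift_adj[OF M])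
    fix v :: "complex vec" assume v: "v \<in> carrier_vec N"
    show "0 \<le> Re (Q (M - complex_of_real \<xi> \<cdot>\<^sub>m 1\<^sub>m N) v)" using Q_shift[OF M(1) v] h v by simp
  qed
qed

lemma Q_lower: assumes M: "M \<in> carrier_mat N N" and v: "v \<in> carrier_vec N"
  shows "- (\<Sum>i<N. \<Sum>j<N. cmod (M $$ (i,j))) * nrm2 v \<le> Re (Q M v)"
proof -
  let ?s = "sqrt (nrm2 v)"
  have "cmod (Q M v) \<le> (\<Sum>i<N. cmod (cnj (v $ i) * (M *\<^sub>v v) $ i))"
    unfolding Q_def scalar_prod_def using M v by (simp add: norm_sum lessThan_atLeast0 del: complex_cnj_mult)
  also have "\<dots> \<le> (\<Sum>i<N. ?s * ((\<Sum>j<N. cmod (M $$ (i,j))) * ?s))"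
  proof (rule sum_mono)
    fix i assume "i \<in> {..<N}"
    then have i: "i < N" by auto
    show "cmod (cnj (v $ i) * (M *\<^sub>v v) $ i) \<le> ?s * ((\<Sum>j<N. cmod (M $$ (i,j))) * ?s)"
      unfolding norm_mult complex_mod_cnj
      by (rule mult_mono) (use cmod_le_sqrt[of i v] mat_vec_entry_bound[OF M v i] v i nrm2_nonneg[of v] in auto)
  qed
  also have "\<dots> = (\<Sum>i<N. \<Sum>j<N. cmod (M $$ (i,j))) * nrm2 v"
  proof -
    have ss: "?s * ?s = nrm2 v" using nrm2_nonneg[of v] by simp
    show ?thesis by (simp add: mult.assoc[symmetric] ss sum_distrib_left mult.commute del: real_sqrt_mult_self)
  qed
  finally have "cmod (Q M v) \<le> (\<Sum>i<N. \<Sum>j<N. cmod (M $$ (i,j))) * nrm2 v" .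
  moreover have "- cmod (Q M v) \<le> Re (Q M v)" using abs_Re_le_cmod[of "Q M v"] by linarith
  ultimately show ?thesis by linarith
qed

lemma nrm2_unit: assumes "i < N" shows "nrm2 (unit_vec N i) = 1"
proof -
  have "nrm2 (unit_vec N i) = (\<Sum>ia<N. if ia = i then 1 else 0)"
    unfolding nrm2_def by (rule sum.cong) (auto simp: unit_vec_def)
  then show ?thesis using assms by simp
qed

lemma nrm2_pos: "v \<in> carrier_vec N \<Longrightarrow> v \<noteq> 0\<^sub>v N \<Longrightarrow> nrm2 v > 0"
  using nrm2_zero nrm2_nonneg by (metis less_eq_real_def)

lemma eigen_finite: assumes M: "(M :: complex mat) \<in> carrier_mat N N"
  shows "finite {x::real. eigenvalue M (complex_of_real x)}"
proof -
  have nz: "char_poly M \<noteq> 0" using degree_monic_char_poly[OF M] by auto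
  have "{x::real. eigenvalue M (complex_of_real x)} \<subseteq> Re ` {z. poly (char_poly M) z = 0}"
  proof
    fix x assume "x \<in> {x::real. eigenvalue M (complex_of_real x)}"
    then have "poly (char_poly M) (complex_of_real x) = 0" using eigenvalue_root_char_poly[OF M] by auto
    then show "x \<in> Re ` {z. poly (char_poly M) z = 0}" by (intro image_eqI[of _ _ "complex_of_real x"]) auto
  qed
  moreover have "finite (Re ` {z. poly (char_poly M) z = 0})" using poly_roots_finite[OF nz] by auto
  ultimately show ?thesis using finite_subset by blast
qed

lemma spectral_char: assumes M: "M \<in> carrier_mat N N" "adj M = M" and N: "0 < N"
  shows "psd (M - complex_of_real \<xi> \<cdot>\<^sub>m 1\<^sub>m N) \<longleftrightarrow> \<xi> \<le> lambda_min M"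
proof -
  define S where "S = {\<xi>::real. \<forall>v \<in> carrier_vec N. \<xi> * nrm2 v \<le> Re (Q M v)}"
  define c where "c = (\<Sum>i<N. \<Sum>j<N. cmod (M $$ (i,j)))"
  have cS: "- c \<in> S" unfolding S_def c_def using Q_lower[OF M(1)] by auto
  have e0: "unit_vec N 0 \<in> carrier_vec N" by simp
  have QM0: "Q M (unit_vec N 0) = M $$ (0,0)" unfolding Q_def using M N by simp
  have bdd: "\<xi> \<le> Re (M $$ (0,0))" if "\<xi> \<in> S" for \<xi>
  proof -
    have "\<xi> * nrm2 (unit_vec N 0) \<le> Re (Q M (unit_vec N 0))" using that e0 unfolding S_def by blast
    then show ?thesis using QM0 nrm2_unit[OF N] by simp
  qed
  define \<xi>0 where "\<xi>0 = Sup S"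
  have bddS: "bdd_above S" using bdd by (intro bdd_aboveI[where M="Re (M $$ (0,0))"]) auto
  have upper: "\<xi> \<le> \<xi>0" if "\<xi> \<in> S" for \<xi> unfolding \<xi>0_def by (rule cSup_upper[OF that bddS])
  have in0: "\<xi>0 \<in> S" unfolding S_def mem_Collect_eq
  proof
    fix v :: "complex vec" assume v: "v \<in> carrier_vec N"
    show "\<xi>0 * nrm2 v \<le> Re (Q M v)"
    proof (cases "nrm2 v = 0")
      case True
      then have "v = 0\<^sub>v N" using nrm2_zero[OF v] by auto
      then show ?thesis using True M by (simp add: Q_def)
    next
      case False
      then have pos: "nrm2 v > 0" using nrm2_nonneg[of v] by auto
      have "\<xi>0 \<le> Re (Q M v) / nrm2 v" unfolding \<xi>0_def
      proof (rule cSup_least)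
        show "S \<noteq> {}" using cS by auto
        fix x assume "x \<in> S"
        then have "x * nrm2 v \<le> Re (Q M v)" using v unfolding S_def by auto
        then show "x \<le> Re (Q M v) / nrm2 v" using pos by (simp add: field_simps)
      qed
      then show ?thesis using pos by (simp add: field_simps)
    qed
  qed
  have down: "\<xi> \<in> S" if "\<xi> \<le> \<xi>0" for \<xi>
    unfolding S_def mem_Collect_eq
  proof
    fix v :: "complex vec" assume v: "v \<in> carrier_vec N"
    have "\<xi> * nrm2 v \<le> \<xi>0 * nrm2 v" using that nrm2_nonneg[of v] by (simp add: mult_right_mono)
    also have "\<dots> \<le> Re (Q M v)" using in0 v unfolding S_def by auto
    finally show "\<xi> * nrm2 v \<le> Re (Q M v)" .
  qed
  define P where "P = M - complex_of_real \<xi>0 \<cdot>\<^sub>m 1\<^sub>m N"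
  have P: "P \<in> carrier_mat N N" unfolding P_def using M by auto
  have psdP: "psd P" unfolding P_def using psd_shift_iff[OF M] in0 unfolding S_def by auto
  have detP: "det P = 0"
  proof (rule ccontr)
    assume "det P \<noteq> 0"
    then have "pd P" using psd_det_pd[OF psdP P] by auto
    then obtain \<epsilon> where eps: "\<epsilon> > 0" and h: "\<forall>v \<in> carrier_vec N. \<epsilon> * nrm2 v \<le> Re (Q P v)"
      using pd_lower[OF _ P] by blast
    have "\<xi>0 + \<epsilon> \<in> S" unfolding S_def mem_Collect_eq
    proof
      fix v :: "complex vec" assume v: "v \<in> carrier_vec N"
      have "\<epsilon> * nrm2 v \<le> Re (Q P v)" using h v by auto
      also have "Re (Q P v) = Re (Q M v) - \<xi>0 * nrm2 v" unfolding P_def using Q_shift[OF M(1) v] by simp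
      finally show "(\<xi>0 + \<epsilon>) * nrm2 v \<le> Re (Q M v)" by (simp add: algebra_simps)
    qed
    then show False using upper eps by fastforce
  qed
  obtain v where v: "v \<in> carrier_vec N" "v \<noteq> 0\<^sub>v N" "P *\<^sub>v v = 0\<^sub>v N"
    using det_0_iff_vec_prod_zero[OF P] detP by auto
  have "P *\<^sub>v v = M *\<^sub>v v - complex_of_real \<xi>0 \<cdot>\<^sub>v v"
    unfolding P_def using M v by (simp add: minus_mult_distrib_mat_vec[of _ N N] smult_one_mat_vec)
  then have eqv: "M *\<^sub>v v - complex_of_real \<xi>0 \<cdot>\<^sub>v v = 0\<^sub>v N" using v by simp
  have "M *\<^sub>v v = complex_of_real \<xi>0 \<cdot>\<^sub>v v"
  proof (rule eq_vecI)
    fix i assume "i < dim_vec (complex_of_real \<xi>0 \<cdot>\<^sub>v v)"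
    then have i: "i < N" using v by auto
    have "(M *\<^sub>v v - complex_of_real \<xi>0 \<cdot>\<^sub>v v) $ i = 0" using eqv i by simp
    then show "(M *\<^sub>v v) $ i = (complex_of_real \<xi>0 \<cdot>\<^sub>v v) $ i" using i v by simp
  qed (use v M in auto)
  then have eig0: "eigenvalue M (complex_of_real \<xi>0)"
    unfolding eigenvalue_def eigenvector_def using v M by auto
  have ge0: "\<xi>0 \<le> x" if ev: "eigenvalue M (complex_of_real x)" for x
  proof -
    obtain w where "eigenvector M w (complex_of_real x)" using ev unfolding eigenvalue_def by blast
    then have w: "w \<in> carrier_vec N" "w \<noteq> 0\<^sub>v N" "M *\<^sub>v w = complex_of_real x \<cdot>\<^sub>v w"
      using M unfolding eigenvector_def by auto
    have "Q M w = complex_of_real x * complex_of_real (nrm2 w)"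
      unfolding Q_def w(3) using w by (simp add: conj_sprod_self)
    then have "Re (Q M w) = x * nrm2 w" by simp
    moreover have "\<xi>0 * nrm2 w \<le> Re (Q M w)" using in0 w unfolding S_def by auto
    moreover have "nrm2 w > 0" using nrm2_pos w by auto
    ultimately show ?thesis by simp
  qed
  have lm: "lambda_min M = \<xi>0" unfolding lambda_min_def
    by (rule Min_eqI) (use eigen_finite[OF M(1)] eig0 ge0 in auto)
  show ?thesis unfolding lm psd_shift_iff[OF M] using upper down unfolding S_def by blast
qed

lemma add_zero_right'[simp]: "dim_row A = a \<Longrightarrow> dim_col A = b \<Longrightarrow> A + 0\<^sub>m a b = (A :: complex mat)"
  by (rule eq_matI) auto
lemma add_zero_left'[simp]: "dim_row A = a \<Longrightarrow> dim_col A = b \<Longrightarrow> 0\<^sub>m a b + A = (A :: complex mat)"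
  by (rule eq_matI) auto

lemma blk3_diag_congr:
  assumes ok: "b3ok M11 M12 M13 M21 M22 M23 M31 M32 M33 n1 n2 n3"
  and P: "P1 \<in> carrier_mat n1 n1" "P2 \<in> carrier_mat n2 n2" "P3 \<in> carrier_mat n3 n3"
  and Q: "Q1 \<in> carrier_mat n1 n1" "Q2 \<in> carrier_mat n2 n2" "Q3 \<in> carrier_mat n3 n3"
  shows "blk3 P1 (0\<^sub>m n1 n2) (0\<^sub>m n1 n3) (0\<^sub>m n2 n1) P2 (0\<^sub>m n2 n3) (0\<^sub>m n3 n1) (0\<^sub>m n3 n2) P3
     * blk3 M11 M12 M13 M21 M22 M23 M31 M32 M33
     * blk3 Q1 (0\<^sub>m n1 n2) (0\<^sub>m n1 n3) (0\<^sub>m n2 n1) Q2 (0\<^sub>m n2 n3) (0\<^sub>m n3 n1) (0\<^sub>m n3 n2) Q3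
   = blk3 (P1 * M11 * Q1) (P1 * M12 * Q2) (P1 * M13 * Q3) (P2 * M21 * Q1) (P2 * M22 * Q2) (P2 * M23 * Q3)
          (P3 * M31 * Q1) (P3 * M32 * Q2) (P3 * M33 * Q3)"
proof -
  have okP: "b3ok P1 (0\<^sub>m n1 n2) (0\<^sub>m n1 n3) (0\<^sub>m n2 n1) P2 (0\<^sub>m n2 n3) (0\<^sub>m n3 n1) (0\<^sub>m n3 n2) P3 n1 n2 n3"
    using P unfolding b3ok_def by auto
  have okQ: "b3ok Q1 (0\<^sub>m n1 n2) (0\<^sub>m n1 n3) (0\<^sub>m n2 n1) Q2 (0\<^sub>m n2 n3) (0\<^sub>m n3 n1) (0\<^sub>m n3 n2) Q3 n1 n2 n3"
    using Q unfolding b3ok_def by auto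
  have d: "dim_row M11 = n1" "dim_col M11 = n1" "dim_row M12 = n1" "dim_col M12 = n2" "dim_row M13 = n1" "dim_col M13 = n3"
    "dim_row M21 = n2" "dim_col M21 = n1" "dim_row M22 = n2" "dim_col M22 = n2" "dim_row M23 = n2" "dim_col M23 = n3"
    "dim_row M31 = n3" "dim_col M31 = n1" "dim_row M32 = n3" "dim_col M32 = n2" "dim_row M33 = n3" "dim_col M33 = n3"
    "dim_row P1 = n1" "dim_col P1 = n1" "dim_row P2 = n2" "dim_col P2 = n2" "dim_row P3 = n3" "dim_col P3 = n3"
    "dim_row Q1 = n1" "dim_col Q1 = n1" "dim_row Q2 = n2" "dim_col Q2 = n2" "dim_row Q3 = n3" "dim_col Q3 = n3"
    using ok P Q unfolding b3ok_def carrier_mat_def by auto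
  have step1: "blk3 P1 (0\<^sub>m n1 n2) (0\<^sub>m n1 n3) (0\<^sub>m n2 n1) P2 (0\<^sub>m n2 n3) (0\<^sub>m n3 n1) (0\<^sub>m n3 n2) P3
     * blk3 M11 M12 M13 M21 M22 M23 M31 M32 M33 =
     blk3 (P1 * M11) (P1 * M12) (P1 * M13) (P2 * M21) (P2 * M22) (P2 * M23) (P3 * M31) (P3 * M32) (P3 * M33)"
    unfolding blk3_mult[OF okP ok] using d
    by simp
  have ok1: "b3ok (P1 * M11) (P1 * M12) (P1 * M13) (P2 * M21) (P2 * M22) (P2 * M23) (P3 * M31) (P3 * M32) (P3 * M33) n1 n2 n3"
    unfolding b3ok_def carrier_mat_def using d by simp
  show ?thesis
    unfolding step1 blk3_mult[OF ok1 okQ] using d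
    by simp
qed

lemma b3ok_intro: "M11 \<in> carrier_mat n1 n1 \<Longrightarrow> M12 \<in> carrier_mat n1 n2 \<Longrightarrow> M13 \<in> carrier_mat n1 n3 \<Longrightarrow>
  M21 \<in> carrier_mat n2 n1 \<Longrightarrow> M22 \<in> carrier_mat n2 n2 \<Longrightarrow> M23 \<in> carrier_mat n2 n3 \<Longrightarrow>
  M31 \<in> carrier_mat n3 n1 \<Longrightarrow> M32 \<in> carrier_mat n3 n2 \<Longrightarrow> M33 \<in> carrier_mat n3 n3 \<Longrightarrow>
  b3ok M11 M12 M13 M21 M22 M23 M31 M32 M33 n1 n2 n3"
  unfolding b3ok_def by auto

lemma congr_dist: assumes S: "S \<in> carrier_mat N N" and P: "P \<in> carrier_mat N N" and R: "R \<in> carrier_mat N N"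
  shows "adj S * (P - c \<cdot>\<^sub>m R) * S = adj S * P * S - c \<cdot>\<^sub>m (adj S * R * S)"
proof -
  have "adj S * (P - c \<cdot>\<^sub>m R) = adj S * P - adj S * (c \<cdot>\<^sub>m R)"
    using S P R by (simp add: mult_minus_distrib_mat[of _ N N])
  also have "adj S * (c \<cdot>\<^sub>m R) = c \<cdot>\<^sub>m (adj S * R)" using S R by (simp add: mult_smult_distrib[of _ N N])
  finally have "adj S * (P - c \<cdot>\<^sub>m R) * S = (adj S * P - c \<cdot>\<^sub>m (adj S * R)) * S" by simp
  also have "\<dots> = adj S * P * S - (c \<cdot>\<^sub>m (adj S * R)) * S"
    using S P R by (simp add: minus_mult_distrib_mat[of _ N N])
  also have "(c \<cdot>\<^sub>m (adj S * R)) * S = c \<cdot>\<^sub>m (adj S * R * S)"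
    using S R by (simp add: mult_smult_assoc_mat[of _ N N])
  finally show ?thesis .
qed

definition bd :: "complex mat \<Rightarrow> complex mat \<Rightarrow> complex mat \<Rightarrow> nat \<Rightarrow> nat \<Rightarrow> complex mat" where
  "bd P1 P2 P3 n m = blk3 P1 (0\<^sub>m n n) (0\<^sub>m n m) (0\<^sub>m n n) P2 (0\<^sub>m n m) (0\<^sub>m m n) (0\<^sub>m m n) P3"

lemma bd_carrier: "P1 \<in> carrier_mat n n \<Longrightarrow> P2 \<in> carrier_mat n n \<Longrightarrow> P3 \<in> carrier_mat m m \<Longrightarrow>
  bd P1 P2 P3 n m \<in> carrier_mat (n + n + m) (n + n + m)"
  unfolding bd_def by simp

lemma bd_mult: assumes "P1 \<in> carrier_mat n n" "P2 \<in> carrier_mat n n" "P3 \<in> carrier_mat m m"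
  "Q1 \<in> carrier_mat n n" "Q2 \<in> carrier_mat n n" "Q3 \<in> carrier_mat m m"
  shows "bd P1 P2 P3 n m * bd Q1 Q2 Q3 n m = bd (P1 * Q1) (P2 * Q2) (P3 * Q3) n m"
  unfolding bd_def using assms
  by (subst blk3_mult) (auto intro!: b3ok_intro)

lemma bd_adj: assumes "P1 \<in> carrier_mat n n" "P2 \<in> carrier_mat n n" "P3 \<in> carrier_mat m m"
  shows "adj (bd P1 P2 P3 n m) = bd (adj P1) (adj P2) (adj P3) n m"
  unfolding bd_def using assms
  by (subst adj_blk3[of _ _ _ _ _ _ _ _ _ n n m]) (auto intro!: b3ok_intro)

lemma bd_one: "bd (1\<^sub>m n) (1\<^sub>m n) (1\<^sub>m m) n m = 1\<^sub>m (n + n + m)"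
  unfolding bd_def by (rule blk3_one)

lemma bd_congr: assumes ok: "b3ok M11 M12 M13 M21 M22 M23 M31 M32 M33 n n m"
  and P: "P1 \<in> carrier_mat n n" "P2 \<in> carrier_mat n n" "P3 \<in> carrier_mat m m"
  and Q: "Q1 \<in> carrier_mat n n" "Q2 \<in> carrier_mat n n" "Q3 \<in> carrier_mat m m"
  shows "bd P1 P2 P3 n m * blk3 M11 M12 M13 M21 M22 M23 M31 M32 M33 * bd Q1 Q2 Q3 n m
   = blk3 (P1 * M11 * Q1) (P1 * M12 * Q2) (P1 * M13 * Q3) (P2 * M21 * Q1) (P2 * M22 * Q2) (P2 * M23 * Q3)
          (P3 * M31 * Q1) (P3 * M32 * Q2) (P3 * M33 * Q3)"
  unfolding bd_def by (rule blk3_diag_congr[OF ok P Q])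

lemma Ds_bd: "Ds n m = bd (1\<^sub>m n) (1\<^sub>m n) (complex_of_real (1 / sqrt 2) \<cdot>\<^sub>m 1\<^sub>m m) n m"
  unfolding Ds_def bd_def ..

lemma diagXX2_bd: "X \<in> carrier_mat n n \<Longrightarrow> diagXX2 X m = bd X X (2 \<cdot>\<^sub>m 1\<^sub>m m) n m"
  unfolding diagXX2_def bd_def by auto

lemma Wtilde_ok: assumes "X \<in> carrier_mat n n" "A \<in> carrier_mat n n" "B \<in> carrier_mat n m"
  "C \<in> carrier_mat m n" "D \<in> carrier_mat m m"
  shows "b3ok X (X * A) (X * B) (adj A * X) X (adj C) (adj B * X) C (adj D + D) n n m"
  using assms by (intro b3ok_intro) auto

lemma Wtilde_carrier: assumes "X \<in> carrier_mat n n" "A \<in> carrier_mat n n" "B \<in> carrier_mat n m"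
  "C \<in> carrier_mat m n" "D \<in> carrier_mat m m"
  shows "Wtilde X A B C D \<in> carrier_mat (n + n + m) (n + n + m)"
  unfolding Wtilde_def using assms by auto

lemma smult_one_prod: "(a \<cdot>\<^sub>m 1\<^sub>m k) * (b \<cdot>\<^sub>m 1\<^sub>m k) = (a * b) \<cdot>\<^sub>m (1\<^sub>m k :: complex mat)"
  using smult_one_mult[of "b \<cdot>\<^sub>m 1\<^sub>m k" k k a] by (simp add: smult_smult_mat)

lemma congr_main:
  assumes A: "A \<in> carrier_mat n n" and B: "B \<in> carrier_mat n m" and C: "C \<in> carrier_mat m n"
    and D: "D \<in> carrier_mat m m" and T: "T \<in> carrier_mat n n" and Ti: "Ti \<in> carrier_mat n n"
    and TTi: "T * Ti = 1\<^sub>m n" and TiT: "Ti * T = 1\<^sub>m n" and XT: "X = adj T * T"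
  shows "loewner_ge (Wtilde X A B C D) (complex_of_real \<xi> \<cdot>\<^sub>m diagXX2 X m) \<longleftrightarrow>
    psd (Ds n m * Wtilde (1\<^sub>m n) (T * A * Ti) (T * B) (C * Ti) D * Ds n m - complex_of_real \<xi> \<cdot>\<^sub>m 1\<^sub>m (n + n + m))"
proof -
  define N where "N = n + n + m"
  have X: "X \<in> carrier_mat n n" using XT T by auto
  define S1 where "S1 = bd Ti Ti (1\<^sub>m m) n m"
  define S1i where "S1i = bd T T (1\<^sub>m m) n m"
  have S1: "S1 \<in> carrier_mat N N" unfolding S1_def N_def using Ti by (simp add: bd_carrier)
  have S1i: "S1i \<in> carrier_mat N N" unfolding S1i_def N_def using T by (simp add: bd_carrier)
  have S1S1i: "S1 * S1i = 1\<^sub>m N" unfolding S1_def S1i_def N_def using T Ti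
    by (simp add: bd_mult TiT bd_one)
  have adjS1: "adj S1 = bd (adj Ti) (adj Ti) (1\<^sub>m m) n m" unfolding S1_def using Ti by (simp add: bd_adj)
  have aTiaT: "adj Ti * adj T = 1\<^sub>m n" using T Ti TTi by (metis adj_mult adj_one)
  have KX: "adj Ti * X = T" unfolding XT using T Ti aTiaT
    by (simp add: assoc_mult_mat[of _ n n _ n _ n, symmetric])
  have XK: "X * Ti = adj T" unfolding XT using T Ti TTi
    by (simp add: assoc_mult_mat[of _ n n _ n _ n])
  define Wt where "Wt = Wtilde X A B C D"
  have Wt: "Wt \<in> carrier_mat N N" unfolding Wt_def N_def using Wtilde_carrier[OF X A B C D] .
  define Dl where "Dl = diagXX2 X m"
  have Dl: "Dl \<in> carrier_mat N N" unfolding Dl_def N_def diagXX2_bd[OF X] using X by (simp add: bd_carrier)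
  define A' where "A' = T * A * Ti"
  define B' where "B' = T * B"
  define C' where "C' = C * Ti"
  have A': "A' \<in> carrier_mat n n" and B': "B' \<in> carrier_mat n m" and C': "C' \<in> carrier_mat m n"
    unfolding A'_def B'_def C'_def using T Ti A B C by auto
  define W1 where "W1 = Wtilde (1\<^sub>m n) A' B' C' D"
  have W1: "W1 \<in> carrier_mat N N" unfolding W1_def N_def using Wtilde_carrier[OF _ A' B' C' D] by simp
  define D1 where "D1 = bd (1\<^sub>m n) (1\<^sub>m n) (2 \<cdot>\<^sub>m 1\<^sub>m m) n m"
  have D1: "D1 \<in> carrier_mat N N" unfolding D1_def N_def by (simp add: bd_carrier)
  have "adj S1 * Wt * S1 = blk3 (adj Ti * X * Ti) (adj Ti * (X*A) * Ti) (adj Ti * (X*B) * 1\<^sub>m m)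
     (adj Ti * (adj A * X) * Ti) (adj Ti * X * Ti) (adj Ti * adj C * 1\<^sub>m m)
     (1\<^sub>m m * (adj B * X) * Ti) (1\<^sub>m m * C * Ti) (1\<^sub>m m * (adj D + D) * 1\<^sub>m m)"
    unfolding adjS1 unfolding S1_def Wt_def Wtilde_def by (rule bd_congr[OF Wtilde_ok[OF X A B C D]]) (use Ti in auto)
  also have "\<dots> = W1"
  proof -
    have e1: "adj Ti * X * Ti = 1\<^sub>m n" using KX TTi by simp
    have e2: "adj Ti * (X*A) * Ti = 1\<^sub>m n * A'"
    proof -
      have "adj Ti * (X*A) = adj Ti * X * A" using Ti X A by (simp add: assoc_mult_mat[of _ n n _ n _ n])
      moreover have "1\<^sub>m n * A' = A'" using A' by simp
      ultimately show ?thesis unfolding A'_def using KX by simp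
    qed
    have e3: "adj Ti * (X*B) * 1\<^sub>m m = 1\<^sub>m n * B'"
    proof -
      have "adj Ti * (X*B) = adj Ti * X * B" using Ti X B by (simp add: assoc_mult_mat[of _ n n _ n _ m])
      moreover have "1\<^sub>m n * B' = B'" using B' by simp
      ultimately show ?thesis unfolding B'_def using KX B T by simp
    qed
    have e4: "adj Ti * (adj A * X) * Ti = adj A' * 1\<^sub>m n"
    proof -
      have "adj Ti * (adj A * X) * Ti = adj Ti * adj A * (X * Ti)"
        using Ti X A by (simp add: assoc_mult_mat[of _ n n _ n _ n])
      also have "\<dots> = adj Ti * adj A * adj T" using XK by simp
      also have "\<dots> = adj A'" unfolding A'_def using T A Ti
        by (simp add: adj_mult[of _ n n _ n] assoc_mult_mat[of _ n n _ n _ n])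
      finally show ?thesis using A' by simp
    qed
    have e6: "adj Ti * adj C * 1\<^sub>m m = adj C'" unfolding C'_def using C Ti by (simp add: adj_mult[of _ m n _ n])
    have e7: "1\<^sub>m m * (adj B * X) * Ti = adj B' * 1\<^sub>m n"
    proof -
      have "1\<^sub>m m * (adj B * X) * Ti = adj B * (X * Ti)" using B X Ti by (simp add: assoc_mult_mat[of _ m n _ n _ n])
      also have "\<dots> = adj B'" unfolding B'_def using XK T B by (simp add: adj_mult[of _ n n _ m])
      finally show ?thesis using B' by simp
    qed
    have e8: "1\<^sub>m m * C * Ti = C'" unfolding C'_def using C Ti by simp
    have e9: "1\<^sub>m m * (adj D + D) * 1\<^sub>m m = adj D + D" using D by simp
    show ?thesis unfolding e1 e2 e3 e4 e6 e7 e8 e9 W1_def Wtilde_def ..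
  qed
  finally have congW: "adj S1 * Wt * S1 = W1" .
  have "adj S1 * Dl * S1 = blk3 (adj Ti * X * Ti) (adj Ti * 0\<^sub>m n n * Ti) (adj Ti * 0\<^sub>m n m * 1\<^sub>m m)
     (adj Ti * 0\<^sub>m n n * Ti) (adj Ti * X * Ti) (adj Ti * 0\<^sub>m n m * 1\<^sub>m m)
     (1\<^sub>m m * 0\<^sub>m m n * Ti) (1\<^sub>m m * 0\<^sub>m m n * Ti) (1\<^sub>m m * (2 \<cdot>\<^sub>m 1\<^sub>m m) * 1\<^sub>m m)"
    unfolding adjS1 unfolding S1_def Dl_def diagXX2_bd[OF X]
    by (subst (2) bd_def, rule bd_congr) (use X Ti in \<open>auto intro!: b3ok_intro\<close>)
  also have "\<dots> = D1" unfolding D1_def bd_def using X Ti KX TTi by simp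
  finally have congD: "adj S1 * Dl * S1 = D1" .
  define d where "d = complex_of_real (1 / sqrt 2)"
  define Dsi where "Dsi = bd (1\<^sub>m n) (1\<^sub>m n) (complex_of_real (sqrt 2) \<cdot>\<^sub>m 1\<^sub>m m) n m"
  have Dsc: "Ds n m \<in> carrier_mat N N" unfolding Ds_bd N_def by (simp add: bd_carrier)
  have Dsi: "Dsi \<in> carrier_mat N N" unfolding Dsi_def N_def by (simp add: bd_carrier)
  define dsc where "dsc = complex_of_real (1 / sqrt 2)"
  define esc where "esc = complex_of_real (sqrt 2)"
  have dd: "dsc * esc = 1"
  proof -
    have "dsc * esc = complex_of_real (1 / sqrt 2 * sqrt 2)" unfolding dsc_def esc_def by (simp only: of_real_mult)
    also have "1 / sqrt 2 * sqrt 2 = (1::real)" by simp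
    finally show ?thesis by simp
  qed
  have DsDsi: "Ds n m * Dsi = 1\<^sub>m N"
    unfolding Ds_bd Dsi_def N_def dsc_def[symmetric] esc_def[symmetric]
    by (subst bd_mult) (auto simp: smult_one_prod dd bd_one)
  have adjDs: "adj (Ds n m) = Ds n m" unfolding Ds_bd by (simp add: bd_adj adj_smult)
  have ddd: "dsc * 2 * dsc = 1"
  proof -
    have "dsc * 2 * dsc = complex_of_real (1 / sqrt 2 * 2 * (1 / sqrt 2))" unfolding dsc_def
      by (simp only: of_real_mult of_real_numeral)
    also have "1 / sqrt 2 * 2 * (1 / sqrt 2) = (1::real)" by (simp add: field_simps)
    finally show ?thesis by simp
  qed
  have "Ds n m * D1 * Ds n m = blk3 (1\<^sub>m n * 1\<^sub>m n * 1\<^sub>m n) (1\<^sub>m n * 0\<^sub>m n n * 1\<^sub>m n)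
     (1\<^sub>m n * 0\<^sub>m n m * (dsc \<cdot>\<^sub>m 1\<^sub>m m))
     (1\<^sub>m n * 0\<^sub>m n n * 1\<^sub>m n) (1\<^sub>m n * 1\<^sub>m n * 1\<^sub>m n)
     (1\<^sub>m n * 0\<^sub>m n m * (dsc \<cdot>\<^sub>m 1\<^sub>m m))
     (dsc \<cdot>\<^sub>m 1\<^sub>m m * 0\<^sub>m m n * 1\<^sub>m n)
     (dsc \<cdot>\<^sub>m 1\<^sub>m m * 0\<^sub>m m n * 1\<^sub>m n)
     (dsc \<cdot>\<^sub>m 1\<^sub>m m * (2 \<cdot>\<^sub>m 1\<^sub>m m) * (dsc \<cdot>\<^sub>m 1\<^sub>m m))"
    unfolding Ds_bd D1_def dsc_def[symmetric]
    by (subst (2) bd_def, rule bd_congr) (auto intro!: b3ok_intro)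
  also have "\<dots> = 1\<^sub>m N"
  proof -
    have "dsc \<cdot>\<^sub>m 1\<^sub>m m * (2 \<cdot>\<^sub>m 1\<^sub>m m) * (dsc \<cdot>\<^sub>m 1\<^sub>m m) = 1\<^sub>m m"
      by (simp only: smult_one_prod ddd) simp
    then show ?thesis unfolding N_def using blk3_one[of n n m] by simp
  qed
  finally have DsD1: "Ds n m * D1 * Ds n m = 1\<^sub>m N" .
  have "loewner_ge Wt (complex_of_real \<xi> \<cdot>\<^sub>m Dl) \<longleftrightarrow> psd (Wt - complex_of_real \<xi> \<cdot>\<^sub>m Dl)"
    unfolding loewner_ge_def ..
  also have "\<dots> \<longleftrightarrow> psd (adj S1 * (Wt - complex_of_real \<xi> \<cdot>\<^sub>m Dl) * S1)"
    using psd_congr_iff[OF minus_carrier_mat[OF smult_carrier_mat[OF Dl]] S1 S1i S1S1i] by simp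
  also have "adj S1 * (Wt - complex_of_real \<xi> \<cdot>\<^sub>m Dl) * S1 = W1 - complex_of_real \<xi> \<cdot>\<^sub>m D1"
    using congr_dist[OF S1 Wt Dl] congW congD by simp
  also have "psd (W1 - complex_of_real \<xi> \<cdot>\<^sub>m D1) \<longleftrightarrow> psd (adj (Ds n m) * (W1 - complex_of_real \<xi> \<cdot>\<^sub>m D1) * Ds n m)"
    using psd_congr_iff[OF minus_carrier_mat[OF smult_carrier_mat[OF D1]] Dsc Dsi DsDsi] by simp
  also have "adj (Ds n m) * (W1 - complex_of_real \<xi> \<cdot>\<^sub>m D1) * Ds n m
     = Ds n m * W1 * Ds n m - complex_of_real \<xi> \<cdot>\<^sub>m 1\<^sub>m N"
    using congr_dist[OF Dsc W1 D1] adjDs DsD1 by simp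
  finally show ?thesis unfolding Wt_def Dl_def W1_def A'_def B'_def C'_def N_def .
qed

lemma minv_props: assumes T: "T \<in> carrier_mat n n" and inv: "invertible_mat T"
  shows "minv T \<in> carrier_mat n n" "T * minv T = 1\<^sub>m n" "minv T * T = 1\<^sub>m n"
proof -
  obtain B where TB: "T * B = 1\<^sub>m (dim_row T)" and BT: "B * T = 1\<^sub>m (dim_row B)"
    using inv unfolding invertible_mat_def inverts_mat_def by auto
  have "dim_col B = n" using TB T by (metis carrier_matD(1) index_mult_mat(3) index_one_mat(3))
  moreover have "dim_row B = n" using BT T by (metis carrier_matD(2) index_mult_mat(3) index_one_mat(3))
  ultimately have B: "B \<in> carrier_mat n n" by auto
  have "T \<in> Units (ring_mat TYPE(complex) n ())"
    unfolding Units_def ring_mat_simps using T B TB BT by auto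
  then have "mat_inverse T \<noteq> None" using mat_inverse(1)[OF T, of "()"] by auto
  then obtain B' where "mat_inverse T = Some B'" by auto
  then have "T * B' = 1\<^sub>m n \<and> B' * T = 1\<^sub>m n \<and> B' \<in> carrier_mat n n" "minv T = B'"
    using mat_inverse(2)[OF T] unfolding minv_def by auto
  then show "minv T \<in> carrier_mat n n" "T * minv T = 1\<^sub>m n" "minv T * T = 1\<^sub>m n" by auto
qed

lemma W1_herm: assumes A': "A' \<in> carrier_mat n n" and B': "B' \<in> carrier_mat n m" and C': "C' \<in> carrier_mat m n"
  and D: "D \<in> carrier_mat m m"
  shows "adj (Wtilde (1\<^sub>m n) A' B' C' D) = Wtilde (1\<^sub>m n) A' B' C' D"
proof -
  have ok: "b3ok (1\<^sub>m n) (1\<^sub>m n * A') (1\<^sub>m n * B') (adj A' * 1\<^sub>m n) (1\<^sub>m n) (adj C') (adj B' * 1\<^sub>m n) C' (adj D + D) n n m"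
    using A' B' C' D by (intro b3ok_intro) auto
  have dd: "adj (adj D + D) = adj D + D" using D by (simp add: adj_add[of _ m m] comm_add_mat[of _ m m])
  show ?thesis unfolding Wtilde_def adj_blk3[OF ok] using A' B' C' D dd
    by (simp add: adj_mult[of _ n n _ n] adj_mult[of _ m n _ n] adj_mult[of _ n n _ m])
qed

lemma MT_herm: assumes A': "A' \<in> carrier_mat n n" and B': "B' \<in> carrier_mat n m" and C': "C' \<in> carrier_mat m n"
  and D: "D \<in> carrier_mat m m"
  shows "adj (Ds n m * Wtilde (1\<^sub>m n) A' B' C' D * Ds n m) = Ds n m * Wtilde (1\<^sub>m n) A' B' C' D * Ds n m"
proof -
  have Dsc: "Ds n m \<in> carrier_mat (n+n+m) (n+n+m)" unfolding Ds_bd by (simp add: bd_carrier)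
  have W: "Wtilde (1\<^sub>m n) A' B' C' D \<in> carrier_mat (n+n+m) (n+n+m)" using Wtilde_carrier[OF _ A' B' C' D] by simp
  have adjDs: "adj (Ds n m) = Ds n m" unfolding Ds_bd by (simp add: bd_adj adj_smult)
  show ?thesis using Dsc W adjDs W1_herm[OF A' B' C' D]
    by (simp add: adj_mult[of _ "n+n+m" "n+n+m" _ "n+n+m"] assoc_mult_mat[of _ "n+n+m" "n+n+m" _ "n+n+m" _ "n+n+m"])
qed

lemma xi_char:
  assumes n: "0 < n" and A: "A \<in> carrier_mat n n" and B: "B \<in> carrier_mat n m" and C: "C \<in> carrier_mat m n"
    and D: "D \<in> carrier_mat m m" and T: "T \<in> carrier_mat n n" and Ti: "Ti \<in> carrier_mat n n"
    and TTi: "T * Ti = 1\<^sub>m n" and TiT: "Ti * T = 1\<^sub>m n" and XT: "X = adj T * T"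
  shows "\<xi> \<in> xi_set X A B C D \<longleftrightarrow> \<xi> \<le> lambda_min (Ds n m * Wtilde (1\<^sub>m n) (T * A * Ti) (T * B) (C * Ti) D * Ds n m)"
proof -
  have A': "T * A * Ti \<in> carrier_mat n n" and B': "T * B \<in> carrier_mat n m" and C': "C * Ti \<in> carrier_mat m n"
    using T Ti A B C by auto
  have Mc: "Ds n m * Wtilde (1\<^sub>m n) (T * A * Ti) (T * B) (C * Ti) D * Ds n m \<in> carrier_mat (n+n+m) (n+n+m)"
    using Wtilde_carrier[OF _ A' B' C' D] unfolding Ds_bd by (simp add: bd_carrier)
  have dD: "dim_row D = m" using D by auto
  show ?thesis
    unfolding xi_set_def mem_Collect_eq dD congr_main[OF A B C D T Ti TTi TiT XT]
    by (rule spectral_char[OF Mc MT_herm[OF A' B' C' D]]) (use n in auto)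
qed

lemma not_minimal_zero: assumes n: "0 < n" and A: "A = 0\<^sub>m n n" and B: "B = 0\<^sub>m n m"
  shows "\<not> minimal_sys A B C D"
proof
  assume "minimal_sys A B C D"
  then have "vec_space.rank (dim_row A) (hcat (0 \<cdot>\<^sub>m 1\<^sub>m (dim_row A) - A) B) = dim_row A"
    unfolding minimal_sys_def by blast
  moreover have "hcat (0 \<cdot>\<^sub>m 1\<^sub>m (dim_row A) - A) B = 0\<^sub>m n (n + m)"
    unfolding A B hcat_def by (rule eq_matI) auto
  ultimately have "vec_space.rank n (0\<^sub>m n (n + m) :: complex mat) = n" using A by simp
  moreover have "vec_space.rank n (0\<^sub>m n (n + m) :: complex mat) = 0" by (rule vec_space.rank_0I)
  ultimately show False using n by simp
qed

lemma part2:
  assumes n: "0 < n" and A: "A \<in> carrier_mat n n" and B: "B \<in> carrier_mat n m" and C: "C \<in> carrier_mat m n"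
    and D: "D \<in> carrier_mat m m" and T: "T \<in> carrier_mat n n" and Ti: "Ti \<in> carrier_mat n n"
    and TTi: "T * Ti = 1\<^sub>m n" and TiT: "Ti * T = 1\<^sub>m n"
    and min: "minimal_sys A B C D"
  shows "\<not> psd (Ds n m * Wtilde (1\<^sub>m n) (T * A * Ti) (T * B) (C * Ti) D * Ds n m - complex_of_real 1 \<cdot>\<^sub>m 1\<^sub>m (n + n + m))"
proof
  define A' where "A' = T * A * Ti"
  define B' where "B' = T * B"
  define C' where "C' = C * Ti"
  have A': "A' \<in> carrier_mat n n" and B': "B' \<in> carrier_mat n m" and C': "C' \<in> carrier_mat m n"
    unfolding A'_def B'_def C'_def using T Ti A B C by auto
  define dsc where "dsc = complex_of_real (1 / sqrt 2)"
  have dsc0: "dsc \<noteq> 0" unfolding dsc_def by simp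
  define M0 where "M0 = Ds n m * Wtilde (1\<^sub>m n) A' B' C' D * Ds n m"
  assume "psd (Ds n m * Wtilde (1\<^sub>m n) (T * A * Ti) (T * B) (C * Ti) D * Ds n m - complex_of_real 1 \<cdot>\<^sub>m 1\<^sub>m (n + n + m))"
  then have psdP: "psd (M0 - 1\<^sub>m (n + n + m))" unfolding M0_def A'_def B'_def C'_def by simp
  have ok: "b3ok (1\<^sub>m n * 1\<^sub>m n * 1\<^sub>m n) (1\<^sub>m n * (1\<^sub>m n * A') * 1\<^sub>m n) (1\<^sub>m n * (1\<^sub>m n * B') * (dsc \<cdot>\<^sub>m 1\<^sub>m m))
     (1\<^sub>m n * (adj A' * 1\<^sub>m n) * 1\<^sub>m n) (1\<^sub>m n * 1\<^sub>m n * 1\<^sub>m n) (1\<^sub>m n * adj C' * (dsc \<cdot>\<^sub>m 1\<^sub>m m))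
     ((dsc \<cdot>\<^sub>m 1\<^sub>m m) * (adj B' * 1\<^sub>m n) * 1\<^sub>m n) ((dsc \<cdot>\<^sub>m 1\<^sub>m m) * C' * 1\<^sub>m n)
     ((dsc \<cdot>\<^sub>m 1\<^sub>m m) * (adj D + D) * (dsc \<cdot>\<^sub>m 1\<^sub>m m)) n n m"
    using A' B' C' D by (intro b3ok_intro) auto
  have M0eq: "M0 = blk3 (1\<^sub>m n * 1\<^sub>m n * 1\<^sub>m n) (1\<^sub>m n * (1\<^sub>m n * A') * 1\<^sub>m n) (1\<^sub>m n * (1\<^sub>m n * B') * (dsc \<cdot>\<^sub>m 1\<^sub>m m))
     (1\<^sub>m n * (adj A' * 1\<^sub>m n) * 1\<^sub>m n) (1\<^sub>m n * 1\<^sub>m n * 1\<^sub>m n) (1\<^sub>m n * adj C' * (dsc \<cdot>\<^sub>m 1\<^sub>m m))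
     ((dsc \<cdot>\<^sub>m 1\<^sub>m m) * (adj B' * 1\<^sub>m n) * 1\<^sub>m n) ((dsc \<cdot>\<^sub>m 1\<^sub>m m) * C' * 1\<^sub>m n)
     ((dsc \<cdot>\<^sub>m 1\<^sub>m m) * (adj D + D) * (dsc \<cdot>\<^sub>m 1\<^sub>m m))"
    unfolding M0_def Ds_bd dsc_def[symmetric] Wtilde_def
    by (rule bd_congr) (use A' B' C' D in \<open>auto intro!: b3ok_intro\<close>)
  have Pc: "M0 - 1\<^sub>m (n + n + m) \<in> carrier_mat (n + n + m) (n + n + m)" by (rule minus_carrier_mat) simp
  have diag0: "(M0 - 1\<^sub>m (n + n + m)) $$ (i, i) = 0" if i: "i < n" for i
  proof -
    have "M0 $$ (i,i) = 1" unfolding M0eq by (subst blk3_index[OF ok]) (use i in auto)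
    then show ?thesis using i M0eq by simp
  qed
  have A0: "A' = 0\<^sub>m n n"
  proof (rule eq_matI)
    fix i j assume "i < dim_row (0\<^sub>m n n :: complex mat)" "j < dim_col (0\<^sub>m n n :: complex mat)"
    then have i: "i < n" and j: "j < n" by auto
    have "(M0 - 1\<^sub>m (n + n + m)) $$ (i, n + j) = 0"
      by (rule zero_diag(2)[OF psdP Pc _ _ diag0[OF i]]) (use i j in auto)
    moreover have "(M0 - 1\<^sub>m (n + n + m)) $$ (i, n + j) = A' $$ (i, j)"
      unfolding M0eq
    proof (subst index_minus_mat)
      show "(blk3 (1\<^sub>m n * 1\<^sub>m n * 1\<^sub>m n) (1\<^sub>m n * (1\<^sub>m n * A') * 1\<^sub>m n) (1\<^sub>m n * (1\<^sub>m n * B') * (dsc \<cdot>\<^sub>m 1\<^sub>m m))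
     (1\<^sub>m n * (adj A' * 1\<^sub>m n) * 1\<^sub>m n) (1\<^sub>m n * 1\<^sub>m n * 1\<^sub>m n) (1\<^sub>m n * adj C' * (dsc \<cdot>\<^sub>m 1\<^sub>m m))
     ((dsc \<cdot>\<^sub>m 1\<^sub>m m) * (adj B' * 1\<^sub>m n) * 1\<^sub>m n) ((dsc \<cdot>\<^sub>m 1\<^sub>m m) * C' * 1\<^sub>m n)
     ((dsc \<cdot>\<^sub>m 1\<^sub>m m) * (adj D + D) * (dsc \<cdot>\<^sub>m 1\<^sub>m m))) $$ (i, n + j) - 1\<^sub>m (n + n + m) $$ (i, n + j) = A' $$ (i, j)"
        by (subst blk3_index[OF ok]) (use i j A' in auto)
    qed (use i j in auto)
    ultimately show "A' $$ (i, j) = 0\<^sub>m n n $$ (i, j)" using i j by simp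
  qed (use A' in auto)
  have B0: "B' = 0\<^sub>m n m"
  proof (rule eq_matI)
    fix i j assume "i < dim_row (0\<^sub>m n m :: complex mat)" "j < dim_col (0\<^sub>m n m :: complex mat)"
    then have i: "i < n" and j: "j < m" by auto
    have "(M0 - 1\<^sub>m (n + n + m)) $$ (i, n + n + j) = 0"
      by (rule zero_diag(2)[OF psdP Pc _ _ diag0[OF i]]) (use i j in auto)
    moreover have "(M0 - 1\<^sub>m (n + n + m)) $$ (i, n + n + j) = dsc * B' $$ (i, j)"
      unfolding M0eq
    proof (subst index_minus_mat)
      show "(blk3 (1\<^sub>m n * 1\<^sub>m n * 1\<^sub>m n) (1\<^sub>m n * (1\<^sub>m n * A') * 1\<^sub>m n) (1\<^sub>m n * (1\<^sub>m n * B') * (dsc \<cdot>\<^sub>m 1\<^sub>m m))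
     (1\<^sub>m n * (adj A' * 1\<^sub>m n) * 1\<^sub>m n) (1\<^sub>m n * 1\<^sub>m n * 1\<^sub>m n) (1\<^sub>m n * adj C' * (dsc \<cdot>\<^sub>m 1\<^sub>m m))
     ((dsc \<cdot>\<^sub>m 1\<^sub>m m) * (adj B' * 1\<^sub>m n) * 1\<^sub>m n) ((dsc \<cdot>\<^sub>m 1\<^sub>m m) * C' * 1\<^sub>m n)
     ((dsc \<cdot>\<^sub>m 1\<^sub>m m) * (adj D + D) * (dsc \<cdot>\<^sub>m 1\<^sub>m m))) $$ (i, n + n + j) - 1\<^sub>m (n + n + m) $$ (i, n + n + j) = dsc * B' $$ (i, j)"
        by (subst blk3_index[OF ok]) (use i j B' in \<open>auto simp: mult_smult_one[OF B']\<close>)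
    qed (use i j in auto)
    ultimately show "B' $$ (i, j) = 0\<^sub>m n m $$ (i, j)" using i j dsc0 by simp
  qed (use B' in auto)
  have "Ti * A' * T = (Ti * T) * A * (Ti * T)" unfolding A'_def using A T Ti
    by (simp add: assoc_mult_mat[of _ n n _ n _ n])
  then have "Ti * A' * T = A" using TiT A by simp
  then have Az: "A = 0\<^sub>m n n" using A0 T Ti by simp
  have "Ti * B' = (Ti * T) * B" unfolding B'_def using B T Ti
    by (simp add: assoc_mult_mat[of _ n n _ n _ m])
  then have "Ti * B' = B" using TiT B by simp
  then have Bz: "B = 0\<^sub>m n m" using B0 Ti by simp
  show False using not_minimal_zero[OF n Az Bz] min by simp
qed

theorem theorem5p1:
  fixes n m :: nat and A B C D X :: "complex mat"
  assumes "0 < n"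
    and "A \<in> carrier_mat n n" and "B \<in> carrier_mat n m"
    and "C \<in> carrier_mat m n" and "D \<in> carrier_mat m m"
    and "minimal_sys A B C D" and "passive_sys A B C D"
    and "X \<in> Xpos A B C D"
  shows "(\<exists>!\<xi>s. \<xi>s \<in> xi_set X A B C D \<and> (\<forall>\<xi> \<in> xi_set X A B C D. \<xi> \<le> \<xi>s)) \<and>
         (\<forall>\<xi>s. \<xi>s \<in> xi_set X A B C D \<and> (\<forall>\<xi> \<in> xi_set X A B C D. \<xi> \<le> \<xi>s) \<longrightarrow>
            \<xi>s < 1 \<and>
            (\<forall>T. T \<in> carrier_mat n n \<and> invertible_mat T \<and> X = adj T * T \<longrightarrow>
               \<xi>s = lambda_min (Ds n m *
                        Wtilde (1\<^sub>m n) (T * A * minv T) (T * B) (C * minv T) D * Ds n m)))"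
proof -
  note n = assms(1) and A = assms(2) and B = assms(3) and C = assms(4) and D = assms(5)
    and min = assms(6)
  have X: "X \<in> carrier_mat n n" and pdX: "pd X" using assms(8) A unfolding Xpos_def by auto
  obtain T0 where T0: "T0 \<in> carrier_mat n n" and
    "\<exists>K \<in> carrier_mat n n. T0 * K = 1\<^sub>m n \<and> K * T0 = 1\<^sub>m n \<and> X = adj T0 * T0"
    using cholesky[OF X pdX] by blast
  then obtain K0 where K0: "K0 \<in> carrier_mat n n" and TK0: "T0 * K0 = 1\<^sub>m n" and KT0: "K0 * T0 = 1\<^sub>m n"
    and XT0: "X = adj T0 * T0" by blast
  define L0 where "L0 = lambda_min (Ds n m * Wtilde (1\<^sub>m n) (T0 * A * K0) (T0 * B) (C * K0) D * Ds n m)"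
  have char0: "\<xi> \<in> xi_set X A B C D \<longleftrightarrow> \<xi> \<le> L0" for \<xi>
    unfolding L0_def by (rule xi_char[OF n A B C D T0 K0 TK0 KT0 XT0])
  have max_iff: "(\<xi>s \<in> xi_set X A B C D \<and> (\<forall>\<xi> \<in> xi_set X A B C D. \<xi> \<le> \<xi>s)) \<longleftrightarrow> \<xi>s = L0" for \<xi>s
    using char0 by (meson order_antisym order_refl)
  have L0lt: "L0 < 1"
  proof (rule ccontr)
    assume "\<not> L0 < 1"
    then have "1 \<le> L0" by simp
    then have "(1::real) \<in> xi_set X A B C D" using char0 by simp
    then have "loewner_ge (Wtilde X A B C D) (complex_of_real 1 \<cdot>\<^sub>m diagXX2 X m)"
      unfolding xi_set_def using D by simp
    then have "psd (Ds n m * Wtilde (1\<^sub>m n) (T0 * A * K0) (T0 * B) (C * K0) D * Ds n m - complex_of_real 1 \<cdot>\<^sub>m 1\<^sub>m (n + n + m))"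
      using congr_main[OF A B C D T0 K0 TK0 KT0 XT0] by blast
    then show False using part2[OF n A B C D T0 K0 TK0 KT0 min] by blast
  qed
  show ?thesis
  proof (intro conjI allI impI)
    show "\<exists>!\<xi>s. \<xi>s \<in> xi_set X A B C D \<and> (\<forall>\<xi> \<in> xi_set X A B C D. \<xi> \<le> \<xi>s)"
      by (rule ex1I[of _ L0]) (use max_iff in auto)
  next
    fix \<xi>s assume h: "\<xi>s \<in> xi_set X A B C D \<and> (\<forall>\<xi> \<in> xi_set X A B C D. \<xi> \<le> \<xi>s)"
    then have xs: "\<xi>s = L0" using max_iff by blast
    then show "\<xi>s < 1" using L0lt by simp
    fix T assume hT: "T \<in> carrier_mat n n \<and> invertible_mat T \<and> X = adj T * T"
    then have T: "T \<in> carrier_mat n n" and invT: "invertible_mat T" and XT: "X = adj T * T" by auto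
    note mi = minv_props[OF T invT]
    have charT: "\<xi> \<in> xi_set X A B C D \<longleftrightarrow> \<xi> \<le> lambda_min (Ds n m *
                        Wtilde (1\<^sub>m n) (T * A * minv T) (T * B) (C * minv T) D * Ds n m)" for \<xi>
      by (rule xi_char[OF n A B C D T mi(1) mi(2) mi(3) XT])
    show "\<xi>s = lambda_min (Ds n m * Wtilde (1\<^sub>m n) (T * A * minv T) (T * B) (C * minv T) D * Ds n m)"
      using h charT by (meson order_antisym order_refl)
  qed
qed

end
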